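(* Let $p$ be a positive integer, $q\ge 3$ an odd integer, and $V$ a finite-dimensional vector space over $\mathbb{Q}$. Let $F$ be a skew-symmetric $q$-multilinear function $V^q\to\mathbb{Q}$ if $p$ is odd, and a symmetric $q$-multilinear function $V^q\to\mathbb{Q}$ if $p$ is even. Then there exists a commutative graded algebra $A=\bigoplus_{i=0}^{pq}A_i$ over $\mathbb{Q}$ satisfying Poincaré duality (with top degree $pq$) such that (i) $A_p=V$, $A_{pq}=\mathbb{Q}$, $A_i=0$ for $i>pq$, and $A_i\ne0$ only if $i$ is a multiple of $p$; (ii) for all $v_1,\dots,v_q\in A_p=V$, $F(v_1,\dots,v_q)=v_1\cup\cdots\cup v_q$ (as elements of $A_{pq}=\mathbb{Q}$).
   Context: A graded algebra over $\mathbb{Q}$ is an associative $\mathbb{Q}$-algebra $A=\bigoplus_{i\ge0}A_i$ (direct sum of vector spaces) whose multiplication $\cup$ maps $A_r\times A_s$ into $A_{r+s}$, with $A_0=\mathbb{Q}$ and $1\in A_0$ the unit. It is commutative if $a\cup b=(-1)^{rs}\,b\cup a$ for $a\in A_r$, $b\in A_s$. Such an $A$ satisfies Poincaré duality (with top degree $n$) if $A_n\cong\mathbb{Q}$, $A_i=0$ for $i>n$, $A_i$ is finite-dimensional for $i<n$, and for every $0\le i\le n$ the map $A_i\to\mathrm{Hom}(A_{n-i},A_n)$, $u\mapsto(v\mapsto u\cup v)$, is an isomorphism. *)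

theory Defs
  imports Complex_Main "HOL-Library.Function_Algebras"
begin

(* Ambient Q-vector space in which the graded algebra is realised:
   functions nat => rat with pointwise addition and scalar multiplication
   (a Q-vector space of countably infinite dimension; every finite-dimensional
   graded algebra embeds into it, so existence here is existence up to iso). *)
type_synonym qvec = "nat \<Rightarrow> rat"

definition qscale :: "rat \<Rightarrow> qvec \<Rightarrow> qvec" where
  "qscale c f = (\<lambda>i. c * f i)"

definition linear_on ::
  "(rat \<Rightarrow> 'a::ab_group_add \<Rightarrow> 'a) \<Rightarrow> (rat \<Rightarrow> 'b::ab_group_add \<Rightarrow> 'b) \<Rightarrow>
   'a set \<Rightarrow> 'b set \<Rightarrow> ('a \<Rightarrow> 'b) \<Rightarrow> bool" where
  "linear_on s1 s2 S T f \<longleftrightarrow>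
     (\<forall>x\<in>S. f x \<in> T) \<and>
     (\<forall>x\<in>S. \<forall>y\<in>S. f (x + y) = f x + f y) \<and>
     (\<forall>c. \<forall>x\<in>S. f (s1 c x) = s2 c (f x))"

definition graded_algebra ::
  "(rat \<Rightarrow> 'a::ab_group_add \<Rightarrow> 'a) \<Rightarrow> 'a set \<Rightarrow> (nat \<Rightarrow> 'a set) \<Rightarrow>
   ('a \<Rightarrow> 'a \<Rightarrow> 'a) \<Rightarrow> 'a \<Rightarrow> bool" where
  "graded_algebra s A G mult one \<longleftrightarrow>
     vector_space s \<and>
     (\<forall>i. module.subspace s (G i)) \<and>
     A = {(\<Sum>i\<in>I. x i) | I x. finite I \<and> (\<forall>i\<in>I. x i \<in> G i)} \<and>
     (\<forall>I x. finite I \<and> (\<forall>i\<in>I. x i \<in> G i) \<and> (\<Sum>i\<in>I. x i) = 0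
              \<longrightarrow> (\<forall>i\<in>I. x i = 0)) \<and>
     (\<forall>a\<in>A. \<forall>b\<in>A. \<forall>c\<in>A. mult (a + b) c = mult a c + mult b c
                         \<and> mult a (b + c) = mult a b + mult a c) \<and>
     (\<forall>k. \<forall>a\<in>A. \<forall>b\<in>A. mult (s k a) b = s k (mult a b) \<and> mult a (s k b) = s k (mult a b)) \<and>
     (\<forall>a\<in>A. \<forall>b\<in>A. \<forall>c\<in>A. mult (mult a b) c = mult a (mult b c)) \<and>
     (\<forall>r s'. \<forall>a\<in>G r. \<forall>b\<in>G s'. mult a b \<in> G (r + s')) \<and>
     one \<noteq> 0 \<and> G 0 = {s k one | k. True} \<and>
     (\<forall>a\<in>A. mult one a = a \<and> mult a one = a)"

definition graded_commutative ::
  "(rat \<Rightarrow> 'a::ab_group_add \<Rightarrow> 'a) \<Rightarrow> (nat \<Rightarrow> 'a set) \<Rightarrow> ('a \<Rightarrow> 'a \<Rightarrow> 'a) \<Rightarrow> bool" where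
  "graded_commutative s G mult \<longleftrightarrow>
     (\<forall>r s'. \<forall>a\<in>G r. \<forall>b\<in>G s'. mult a b = s ((-1) ^ (r * s')) (mult b a))"

definition finite_dim_sub :: "(rat \<Rightarrow> 'a::ab_group_add \<Rightarrow> 'a) \<Rightarrow> 'a set \<Rightarrow> bool" where
  "finite_dim_sub s S \<longleftrightarrow> (\<exists>B. finite B \<and> B \<subseteq> S \<and> module.span s B = S)"

definition poincare_duality ::
  "(rat \<Rightarrow> 'a::ab_group_add \<Rightarrow> 'a) \<Rightarrow> (nat \<Rightarrow> 'a set) \<Rightarrow> ('a \<Rightarrow> 'a \<Rightarrow> 'a) \<Rightarrow> nat \<Rightarrow> bool" where
  "poincare_duality s G mult n \<longleftrightarrow>
     (\<exists>f. linear_on s (*) (G n) UNIV f \<and> bij_betw f (G n) (UNIV :: rat set)) \<and>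
     (\<forall>i>n. G i = {0}) \<and>
     (\<forall>i<n. finite_dim_sub s (G i)) \<and>
     (\<forall>i\<le>n.
        \<comment> \<open>u \<mapsto> (v \<mapsto> u \<cup> v) : A_i \<rightarrow> Hom(A_{n-i}, A_n) is injective \<close>
        (\<forall>u\<in>G i. (\<forall>v\<in>G (n - i). mult u v = 0) \<longrightarrow> u = 0) \<and>
        \<comment> \<open>... and surjective \<close>
        (\<forall>h. linear_on s s (G (n - i)) (G n) h \<longrightarrow>
              (\<exists>u\<in>G i. \<forall>v\<in>G (n - i). h v = mult u v)))"

definition cup_prod :: "('a \<Rightarrow> 'a \<Rightarrow> 'a) \<Rightarrow> 'a \<Rightarrow> 'a list \<Rightarrow> 'a" where
  "cup_prod mult one xs = foldr mult xs one"

definition multilinear ::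
  "(rat \<Rightarrow> 'v::ab_group_add \<Rightarrow> 'v) \<Rightarrow> nat \<Rightarrow> ((nat \<Rightarrow> 'v) \<Rightarrow> rat) \<Rightarrow> bool" where
  "multilinear s q F \<longleftrightarrow>
     (\<forall>v w. (\<forall>i<q. v i = w i) \<longrightarrow> F v = F w) \<and>
     (\<forall>k<q. \<forall>v x y. F (v(k := x + y)) = F (v(k := x)) + F (v(k := y))) \<and>
     (\<forall>k<q. \<forall>v c x. F (v(k := s c x)) = c * F (v(k := x)))"

definition symmetric_ml :: "nat \<Rightarrow> ((nat \<Rightarrow> 'v) \<Rightarrow> rat) \<Rightarrow> bool" where
  "symmetric_ml q F \<longleftrightarrow>
     (\<forall>i<q. \<forall>j<q. \<forall>v. F (v(i := v j, j := v i)) = F v)"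

definition skew_symmetric_ml :: "nat \<Rightarrow> ((nat \<Rightarrow> 'v) \<Rightarrow> rat) \<Rightarrow> bool" where
  "skew_symmetric_ml q F \<longleftrightarrow>
     (\<forall>i<q. \<forall>j<q. i \<noteq> j \<longrightarrow> (\<forall>v. F (v(i := v j, j := v i)) = - F v))"

end

theory Submission
  imports Defs "HOL-Library.Nat_Bijection"
begin
definition fsc :: "rat \<Rightarrow> ('i \<Rightarrow> rat) \<Rightarrow> ('i \<Rightarrow> rat)" where "fsc c t = (\<lambda>x. c * t x)"
interpretation fv: vector_space "fsc :: rat \<Rightarrow> ('i \<Rightarrow> rat) \<Rightarrow> _"
  by unfold_locales (auto simp: fsc_def fun_eq_iff algebra_simps)
lemma qscale_fsc: "qscale = fsc" by (auto simp: fun_eq_iff qscale_def fsc_def)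

lemma (in vector_space) fin_dim_subspace:
  assumes "subspace Y" "Y \<subseteq> span C" "finite C"
  shows "\<exists>B. finite B \<and> B \<subseteq> Y \<and> span B = Y"
proof -
  obtain B where B: "B \<subseteq> Y" "independent B" "Y \<subseteq> span B"
    using maximal_independent_subset by blast
  have "finite B" using independent_span_bound[OF assms(3) B(2)] B(1) assms(2) by blast
  moreover have "span B = Y"
    using B assms(1) span_minimal[of B Y] by blast
  ultimately show ?thesis using B(1) by blast
qed

definition ipK :: "'i set \<Rightarrow> ('i \<Rightarrow> rat) \<Rightarrow> ('i \<Rightarrow> rat) \<Rightarrow> rat" where
  "ipK K x y = (\<Sum>i\<in>K. x i * y i)"

lemma ipK_add1: "ipK K (x + y) z = ipK K x z + ipK K y z"
  by (simp add: ipK_def sum.distrib algebra_simps)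
lemma ipK_add2: "ipK K z (x + y) = ipK K z x + ipK K z y"
  by (simp add: ipK_def sum.distrib algebra_simps)
lemma ipK_diff1: "ipK K (x - y) z = ipK K x z - ipK K y z"
  by (simp add: ipK_def sum_subtractf algebra_simps)
lemma ipK_diff2: "ipK K z (x - y) = ipK K z x - ipK K z y"
  by (simp add: ipK_def sum_subtractf algebra_simps)
lemma ipK_sc1: "ipK K (fsc c x) z = c * ipK K x z"
  by (simp add: ipK_def fsc_def sum_distrib_left algebra_simps)
lemma ipK_sc2: "ipK K z (fsc c x) = c * ipK K z x"
  by (simp add: ipK_def fsc_def sum_distrib_left algebra_simps)
lemma ipK_sym: "ipK K x y = ipK K y x"
  by (simp add: ipK_def algebra_simps)

lemma ipK_pos:
  assumes "finite K" "ipK K x x = 0" "\<forall>i. i \<notin> K \<longrightarrow> x i = 0"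
  shows "x = 0"
proof -
  have "\<forall>i\<in>K. x i * x i = 0"
    using assms(2) unfolding ipK_def
    by (subst sum_nonneg_eq_0_iff[symmetric]) (auto simp: assms(1))
  then show ?thesis using assms(3) by (auto simp: fun_eq_iff)
qed

lemma span_supp:
  assumes "\<forall>b\<in>B. \<forall>i. i \<notin> K \<longrightarrow> b i = 0" "y \<in> fv.span B"
  shows "\<forall>i. i \<notin> K \<longrightarrow> y i = 0"
proof -
  have "fv.subspace {y. \<forall>i. i \<notin> K \<longrightarrow> y i = (0::rat)}"
    by (auto simp: fv.subspace_def fsc_def)
  then show ?thesis using fv.span_minimal[of B "{y. \<forall>i. i \<notin> K \<longrightarrow> y i = (0::rat)}"] assms by auto
qed

lemma riesz_span:
  fixes B :: "('i \<Rightarrow> rat) set"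
  assumes "finite B" "finite K" "\<forall>b\<in>B. \<forall>i. i \<notin> K \<longrightarrow> b i = 0"
  shows "(\<forall>y\<in>fv.span B. \<forall>z\<in>fv.span B. h (y + z) = h y + h z) \<Longrightarrow>
         (\<forall>c. \<forall>y\<in>fv.span B. h (fsc c y) = c * h y) \<Longrightarrow>
         \<exists>c\<in>fv.span B. \<forall>y\<in>fv.span B. h y = ipK K c y"
  using assms(1,3)
proof (induction B arbitrary: h rule: finite_induct)
  case empty
  then show ?case by (auto intro!: bexI[of _ 0] simp: ipK_def)
next
  case (insert b B h)
  have sub: "fv.span B \<subseteq> fv.span (insert b B)" by (simp add: fv.span_mono subset_insertI)
  obtain c' where c': "c' \<in> fv.span B" "\<forall>y\<in>fv.span B. h y = ipK K c' y"
    using insert.IH[of h] insert.prems sub by blast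
  obtain b' where b': "b' \<in> fv.span B" "\<forall>y\<in>fv.span B. ipK K b y = ipK K b' y"
  proof -
    have "\<exists>c\<in>fv.span B. \<forall>y\<in>fv.span B. ipK K b y = ipK K c y"
      by (rule insert.IH) (use insert.prems ipK_add2 ipK_sc2 in blast)+
    then show ?thesis using that by (metis ipK_sym)
  qed
  define r where "r = b - b'"
  have bin: "b \<in> fv.span (insert b B)" by (simp add: fv.span_base)
  have rin: "r \<in> fv.span (insert b B)" unfolding r_def
    using b'(1) sub bin by (simp add: fv.span_diff subsetD)
  have rorth: "ipK K r y = 0" if "y \<in> fv.span B" for y
    using b'(2) that by (simp add: r_def ipK_diff1)
  have rb: "ipK K r b = ipK K r r"
  proof -
    have "ipK K r b' = 0" using rorth[OF b'(1)] .
    then show ?thesis by (simp add: r_def ipK_diff2)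
  qed
  have suppr: "\<forall>i. i \<notin> K \<longrightarrow> r i = 0"
    using span_supp[of "insert b B" K r] rin insert.prems by auto
  show ?case
  proof (cases "ipK K r r = 0")
    case True
    then have "r = 0" using ipK_pos[OF assms(2) True suppr] by simp
    then have "b \<in> fv.span B" using b'(1) by (simp add: r_def)
    then have eq: "fv.span (insert b B) = fv.span B"
      by (simp add: fv.span_redundant)
    show ?thesis using c' eq by auto
  next
    case False
    define t where "t = (h b - ipK K c' b) / ipK K r r"
    define c where "c = c' + fsc t r"
    have cin: "c \<in> fv.span (insert b B)" unfolding c_def
      using c'(1) sub rin by (simp add: fv.span_add fv.span_scale subsetD)
    have "h y = ipK K c y" if y: "y \<in> fv.span (insert b B)" for y
    proof -
      obtain k where k: "y - fsc k b \<in> fv.span B" using y fv.span_breakdown_eq by blast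
      define y' where "y' = y - fsc k b"
      have yy: "y = y' + fsc k b" by (simp add: y'_def)
      have y'in: "y' \<in> fv.span (insert b B)" using k sub by (auto simp: y'_def)
      have kbin: "fsc k b \<in> fv.span (insert b B)" using bin by (simp add: fv.span_scale)
      have "h y = h y' + h (fsc k b)"
        using insert.prems(1) y'in kbin yy unfolding plus_fun_def by blast
      also have "h (fsc k b) = k * h b" using insert.prems(2) bin by blast
      finally have "h y = h y' + k * h b" .
      moreover have "ipK K c y = ipK K c' y' + k * ipK K c' b + t * ipK K r y' + t * k * ipK K r b"
        by (simp add: c_def yy ipK_add1 ipK_add2 ipK_sc1 ipK_sc2 algebra_simps)
      moreover have "ipK K r y' = 0" using rorth k by (simp add: y'_def)
      moreover have "h y' = ipK K c' y'" using c'(2) k by (simp add: y'_def)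
      moreover have "t * ipK K r b = h b - ipK K c' b" using False by (simp add: t_def rb)
      ultimately show ?thesis by (simp add: algebra_simps)
    qed
    then show ?thesis using cin by blast
  qed
qed

lemma sum_fun_apply: "(sum f A) x = (\<Sum>a\<in>A. f a x)"
  by (induction A rule: infinite_finite_induct) auto

lemma upd_app: "a < length u \<Longrightarrow> (x @ u @ y)[length x + a := v] = x @ u[a := v] @ y"
  by (simp add: list_update_append)

locale tens =
  fixes n :: nat and eps :: rat
  assumes eps2: "eps * eps = 1"
begin

definition T :: "nat \<Rightarrow> nat list set" where
  "T j = {xs. length xs = j \<and> set xs \<subseteq> {..<n}}"

definition S :: "nat \<Rightarrow> (nat list \<Rightarrow> rat) set" where
  "S j = {t. (\<forall>xs. xs \<notin> T j \<longrightarrow> t xs = 0) \<and>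
      (\<forall>xs\<in>T j. \<forall>a<j. \<forall>b<j. a \<noteq> b \<longrightarrow> t (xs[a := xs!b, b := xs!a]) = eps * t xs)}"

definition ip :: "nat \<Rightarrow> (nat list \<Rightarrow> rat) \<Rightarrow> (nat list \<Rightarrow> rat) \<Rightarrow> rat" where
  "ip j = ipK (T j)"

lemma finite_T[simp]: "finite (T j)"
proof -
  have "T j = {xs. set xs \<subseteq> {..<n} \<and> length xs = j}" by (auto simp: T_def)
  then show ?thesis using finite_lists_length_eq[of "{..<n}" j] by simp
qed

lemma T0[simp]: "T 0 = {[]}" by (auto simp: T_def)

lemma T_app: "u \<in> T k \<Longrightarrow> w \<in> T l \<Longrightarrow> u @ w \<in> T (k + l)"
  by (auto simp: T_def)

lemma T_app_iff: "u @ w \<in> T (length u + length w) \<longleftrightarrow> set u \<subseteq> {..<n} \<and> set w \<subseteq> {..<n}"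
  by (auto simp: T_def)

lemma T_Cons: "(i # w \<in> T (Suc l)) \<longleftrightarrow> i < n \<and> w \<in> T l"
  by (auto simp: T_def)

lemma T_length: "xs \<in> T j \<Longrightarrow> length xs = j" by (simp add: T_def)

lemma sum_T_split:
  "(\<Sum>xs\<in>T (k + l). g xs) = (\<Sum>u\<in>T k. \<Sum>w\<in>T l. g (u @ w))"
proof -
  have inj: "inj_on (\<lambda>(u, w). u @ w) (T k \<times> T l)"
    by (auto simp: inj_on_def T_def)
  have img: "(\<lambda>(u, w). u @ w) ` (T k \<times> T l) = T (k + l)"
  proof
    show "(\<lambda>(u, w). u @ w) ` (T k \<times> T l) \<subseteq> T (k + l)" using T_app by auto
    show "T (k + l) \<subseteq> (\<lambda>(u, w). u @ w) ` (T k \<times> T l)"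
    proof
      fix xs assume "xs \<in> T (k + l)"
      then have "take k xs \<in> T k" "drop k xs \<in> T l" "xs = take k xs @ drop k xs"
        by (auto simp: T_def dest: in_set_takeD in_set_dropD)
      then show "xs \<in> (\<lambda>(u, w). u @ w) ` (T k \<times> T l)" by (metis (no_types, lifting) SigmaI case_prod_conv image_eqI)
    qed
  qed
  have "(\<Sum>xs\<in>T (k + l). g xs) = (\<Sum>p\<in>T k \<times> T l. g ((\<lambda>(u, w). u @ w) p))"
    using sum.reindex[OF inj, of g] img by simp
  also have "\<dots> = (\<Sum>u\<in>T k. \<Sum>w\<in>T l. g (u @ w))"
    by (simp add: sum.cartesian_product split_def)
  finally show ?thesis .
qed

lemma T1_eq: "T 1 = (\<lambda>i. [i]) ` {..<n}"
proof
  show "T 1 \<subseteq> (\<lambda>i. [i]) ` {..<n}"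
  proof
    fix xs assume "xs \<in> T 1"
    then obtain i where "xs = [i]" "i < n" by (auto simp: T_def length_Suc_conv)
    then show "xs \<in> (\<lambda>i. [i]) ` {..<n}" by auto
  qed
qed (auto simp: T_def)

lemma sum_T1: "(\<Sum>u\<in>T 1. g u) = (\<Sum>i<n. g [i])"
  by (subst T1_eq) (simp add: sum.reindex inj_on_def)

lemma sum_T_Suc: "(\<Sum>xs\<in>T (Suc l). g xs) = (\<Sum>i<n. \<Sum>w\<in>T l. g (i # w))"
proof -
  have a: "(\<Sum>xs\<in>T (1 + l). g xs) = (\<Sum>u\<in>T 1. \<Sum>w\<in>T l. g (u @ w))" by (rule sum_T_split)
  have b: "(\<Sum>u\<in>T 1. \<Sum>w\<in>T l. g (u @ w)) = (\<Sum>i<n. \<Sum>w\<in>T l. g ([i] @ w))" by (rule sum_T1)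
  from a b show ?thesis by simp
qed

lemma S_supp: "t \<in> S j \<Longrightarrow> xs \<notin> T j \<Longrightarrow> t xs = 0" by (simp add: S_def)

lemma S_swap: "t \<in> S j \<Longrightarrow> xs \<in> T j \<Longrightarrow> a < j \<Longrightarrow> b < j \<Longrightarrow> a \<noteq> b \<Longrightarrow>
   t (xs[a := xs!b, b := xs!a]) = eps * t xs" by (simp add: S_def)

lemma S_zero[simp]: "0 \<in> S j" by (simp add: S_def)

lemma S_add: "s \<in> S j \<Longrightarrow> t \<in> S j \<Longrightarrow> s + t \<in> S j"
  by (simp add: S_def algebra_simps)

lemma S_fsc: "t \<in> S j \<Longrightarrow> fsc c t \<in> S j"
  by (simp add: S_def fsc_def algebra_simps)

lemma S_sum: "(\<And>z. z \<in> Z \<Longrightarrow> t z \<in> S j) \<Longrightarrow> sum t Z \<in> S j"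
  by (induction Z rule: infinite_finite_induct) (auto intro: S_add)

lemma S_lam_sum: "(\<And>z. z \<in> Z \<Longrightarrow> (\<lambda>xs. t z xs) \<in> S j) \<Longrightarrow> (\<lambda>xs. \<Sum>z\<in>Z. c z * t z xs) \<in> S j"
proof -
  assume a: "\<And>z. z \<in> Z \<Longrightarrow> (\<lambda>xs. t z xs) \<in> S j"
  have "(\<lambda>xs. \<Sum>z\<in>Z. c z * t z xs) = (\<Sum>z\<in>Z. fsc (c z) (t z))"
    by (simp add: fun_eq_iff sum_fun_apply fsc_def)
  then show ?thesis using a by (auto intro!: S_sum S_fsc)
qed

lemma subspace_S: "fv.subspace (S j)"
  by (auto simp: fv.subspace_def S_add S_fsc)

lemma S_slice:
  assumes phi: "\<phi> \<in> S N" and x: "x \<in> T i" and y: "y \<in> T l" and N: "N = i + k + l"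
  shows "(\<lambda>u. if u \<in> T k then \<phi> (x @ u @ y) else 0) \<in> S k"
  unfolding S_def
proof (intro CollectI conjI allI ballI impI)
  fix u a b assume u: "u \<in> T k" and ab: "a < k" "b < k" "a \<noteq> b"
  have lu: "length u = k" using u by (simp add: T_def)
  have uu: "u[a := u ! b, b := u ! a] \<in> T k"
    using u ab by (auto simp: T_def dest!: set_update_subset_insert[THEN subsetD])
  have lx: "length x = i" using x by (simp add: T_def)
  have eq: "x @ u[a := u ! b, b := u ! a] @ y =
     (x @ u @ y)[i + a := (x @ u @ y) ! (i + b), i + b := (x @ u @ y) ! (i + a)]"
    using lu lx ab by (simp add: upd_app nth_append list_update_append)
  have "x @ u @ y \<in> T N" using x u y N by (auto simp: T_def)
  then show "(if u[a := u ! b, b := u ! a] \<in> T k then \<phi> (x @ u[a := u ! b, b := u ! a] @ y) else 0) =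
         eps * (if u \<in> T k then \<phi> (x @ u @ y) else 0)"
    using uu u eq S_swap[OF phi, of "x @ u @ y" "i + a" "i + b"] ab N by simp
qed simp

lemma S_adj:
  assumes "\<phi> \<in> S N" "x @ a # b # r \<in> T N"
  shows "\<phi> (x @ a # b # r) = eps * \<phi> (x @ b # a # r)"
proof -
  have l: "length (x @ a # b # r) = N" using assms(2) by (simp add: T_def)
  have eq: "(x @ a # b # r)[length x := (x @ a # b # r) ! Suc (length x), Suc (length x) := (x @ a # b # r) ! length x] = x @ b # a # r"
    by (simp add: list_update_append nth_append)
  have "\<phi> (x @ b # a # r) = eps * \<phi> (x @ a # b # r)"
    using S_swap[OF assms(1,2), of "length x" "Suc (length x)"] l eq by simp
  then have "eps * \<phi> (x @ b # a # r) = (eps * eps) * \<phi> (x @ a # b # r)" by simp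
  then show ?thesis using eps2 by simp
qed

lemma S_move1:
  assumes "\<phi> \<in> S N" "x @ a # w @ r \<in> T N"
  shows "\<phi> (x @ a # w @ r) = eps ^ length w * \<phi> (x @ w @ a # r)"
  using assms(2)
proof (induction w arbitrary: x)
  case Nil then show ?case by simp
next
  case (Cons b w)
  have "\<phi> (x @ a # b # w @ r) = eps * \<phi> (x @ b # a # w @ r)"
    using S_adj[OF assms(1)] Cons.prems by simp
  also have "\<phi> (x @ b # a # w @ r) = \<phi> ((x @ [b]) @ a # w @ r)" by simp
  also have "\<dots> = eps ^ length w * \<phi> ((x @ [b]) @ w @ a # r)"
    by (rule Cons.IH) (use Cons.prems in \<open>auto simp: T_def\<close>)
  finally show ?case by simp
qed

lemma S_block:
  assumes "\<phi> \<in> S N" "x @ u @ w @ r \<in> T N"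
  shows "\<phi> (x @ u @ w @ r) = eps ^ (length u * length w) * \<phi> (x @ w @ u @ r)"
  using assms(2)
proof (induction u arbitrary: x)
  case Nil then show ?case by simp
next
  case (Cons a u)
  have "\<phi> (x @ (a # u) @ w @ r) = \<phi> ((x @ [a]) @ u @ w @ r)" by simp
  also have "\<dots> = eps ^ (length u * length w) * \<phi> ((x @ [a]) @ w @ u @ r)"
    by (rule Cons.IH) (use Cons.prems in \<open>auto simp: T_def\<close>)
  also have "\<phi> ((x @ [a]) @ w @ u @ r) = \<phi> (x @ a # w @ (u @ r))" by simp
  also have "\<dots> = eps ^ length w * \<phi> (x @ w @ a # u @ r)"
    by (rule S_move1[OF assms(1)]) (use Cons.prems in \<open>auto simp: T_def\<close>)
  finally show ?case by (simp add: power_add algebra_simps)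
qed

lemma eps_pow_even: "eps ^ (k + k) = 1"
  by (metis eps2 power_add power_mult_distrib power_one mult_2 power_mult)

lemma ip_pos: "t \<in> S j \<Longrightarrow> ip j t t = 0 \<Longrightarrow> t = 0"
  unfolding ip_def by (rule ipK_pos) (auto simp: S_def)

definition dl :: "nat list \<Rightarrow> nat list \<Rightarrow> rat" where
  "dl xs = (\<lambda>ys. if ys = xs then 1 else 0)"

lemma S_span: "\<exists>B. finite B \<and> B \<subseteq> S j \<and> fv.span B = S j"
proof (rule fv.fin_dim_subspace[OF subspace_S])
  show "finite (dl ` T j)" by simp
  show "S j \<subseteq> fv.span (dl ` T j)"
  proof
    fix t assume t: "t \<in> S j"
    have "t ys = (\<Sum>xs\<in>T j. fsc (t xs) (dl xs)) ys" for ys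
    proof -
      have "(\<Sum>xs\<in>T j. fsc (t xs) (dl xs)) ys = (\<Sum>xs\<in>T j. t xs * (if ys = xs then 1 else 0))"
        by (simp add: sum_fun_apply fsc_def dl_def)
      also have "\<dots> = (\<Sum>xs\<in>T j. if xs = ys then t ys else 0)" by (rule sum.cong) (simp_all split: if_splits)
      also have "\<dots> = (if ys \<in> T j then t ys else 0)" by (simp add: sum.delta)
      finally show ?thesis using t by (auto simp: S_def)
    qed
    then have "t = (\<Sum>xs\<in>T j. fsc (t xs) (dl xs))" by (rule ext)
    also have "\<dots> \<in> fv.span (dl ` T j)"
      by (intro fv.span_sum fv.span_scale fv.span_base) auto
    finally show "t \<in> fv.span (dl ` T j)" .
  qed
qed

lemma riesz:
  assumes add: "\<And>x y. x \<in> S j \<Longrightarrow> y \<in> S j \<Longrightarrow> h (x + y) = h x + h y"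
    and sc: "\<And>c x. x \<in> S j \<Longrightarrow> h (fsc c x) = c * h x"
  shows "\<exists>c\<in>S j. \<forall>\<phi>\<in>S j. ip j c \<phi> = h \<phi>"
proof -
  obtain B where B: "finite B" "B \<subseteq> S j" "fv.span B = S j" using S_span by blast
  have "\<exists>c\<in>fv.span B. \<forall>y\<in>fv.span B. h y = ipK (T j) c y"
    by (rule riesz_span) (use B add sc in \<open>auto simp: S_def\<close>)
  then show ?thesis using B by (auto simp: ip_def)
qed

lemma S_diff: "s \<in> S j \<Longrightarrow> t \<in> S j \<Longrightarrow> s - t \<in> S j"
  by (simp add: S_def algebra_simps)

lemma ip_unique:
  assumes "c \<in> S j" "c' \<in> S j" "\<forall>\<phi>\<in>S j. ip j c \<phi> = ip j c' \<phi>"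
  shows "c = c'"
proof -
  have d: "c - c' \<in> S j" using assms by (simp add: S_diff)
  have "ip j (c - c') (c - c') = 0" using assms(3) d by (simp add: ip_def ipK_diff1)
  then show ?thesis using ip_pos[OF d] by simp
qed

end


lemma eps_pow: "tens eps \<Longrightarrow> eps ^ k = (if even k then 1 else eps)"
proof (induction k)
  case (Suc k) then show ?case by (auto simp: tens_def)
qed simp

locale alg = tens +
  fixes q m :: nat and f :: "nat list \<Rightarrow> rat"
  assumes qm: "q = 2 * m + 1" and m1: "1 \<le> m" and fS: "f \<in> S q"
begin

lemma epsp: "eps ^ k = (if even k then 1 else eps)"
  using eps_pow tens_axioms by blast

definition ord :: "nat \<Rightarrow> nat" where "ord d = (if d \<le> m then d else q - d)"

definition RR :: "nat \<Rightarrow> ((nat list \<Rightarrow> rat) \<Rightarrow> rat) \<Rightarrow> (nat list \<Rightarrow> rat)" where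
  "RR j g = (SOME c. c \<in> S j \<and> (\<forall>\<phi>\<in>S j. ip j c \<phi> = g \<phi>))"

definition llf :: "nat \<Rightarrow> nat \<Rightarrow> (nat list \<Rightarrow> rat) \<Rightarrow> (nat list \<Rightarrow> rat) \<Rightarrow> (nat list \<Rightarrow> rat) \<Rightarrow> rat" where
  "llf k l a b \<phi> = (\<Sum>u\<in>T k. \<Sum>w\<in>T l. a u * b w * \<phi> (u @ w))"

definition fc :: "nat \<Rightarrow> nat \<Rightarrow> (nat list \<Rightarrow> rat) \<Rightarrow> (nat list \<Rightarrow> rat) \<Rightarrow> (nat list \<Rightarrow> rat)" where
  "fc k l a b = (\<lambda>xs. if xs \<in> T (q - (k + l)) then (\<Sum>u\<in>T k. \<Sum>w\<in>T l. a u * b w * f (u @ w @ xs)) else 0)"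

definition cr :: "nat \<Rightarrow> nat \<Rightarrow> (nat list \<Rightarrow> rat) \<Rightarrow> (nat list \<Rightarrow> rat) \<Rightarrow> (nat list \<Rightarrow> rat)" where
  "cr k j a \<phi> = (\<lambda>xs. if xs \<in> T (j - k) then (\<Sum>u\<in>T k. a u * \<phi> (u @ xs)) else 0)"

definition M :: "nat \<Rightarrow> nat \<Rightarrow> (nat list \<Rightarrow> rat) \<Rightarrow> (nat list \<Rightarrow> rat) \<Rightarrow> (nat list \<Rightarrow> rat)" where
  "M d1 d2 a b =
    (if q < d1 + d2 then 0
     else if d1 \<le> m \<and> d2 \<le> m then
       (if d1 + d2 \<le> m then RR (d1 + d2) (llf d1 d2 a b) else fc d1 d2 a b)
     else if d1 \<le> m then fsc (eps ^ (d1 * d2)) (cr d1 (q - d2) a b)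
     else cr d2 (q - d1) b a)"

lemma RR_spec:
  assumes "\<And>x y. x \<in> S j \<Longrightarrow> y \<in> S j \<Longrightarrow> g (x + y) = g x + g y"
    and "\<And>c x. x \<in> S j \<Longrightarrow> g (fsc c x) = c * g x"
  shows "RR j g \<in> S j \<and> (\<forall>\<phi>\<in>S j. ip j (RR j g) \<phi> = g \<phi>)"
proof -
  have "\<exists>c. c \<in> S j \<and> (\<forall>\<phi>\<in>S j. ip j c \<phi> = g \<phi>)" using riesz[OF assms] by blast
  then show ?thesis unfolding RR_def by (rule someI_ex)
qed

lemma RR_eq:
  assumes "c \<in> S j" "\<forall>\<phi>\<in>S j. ip j c \<phi> = g \<phi>"
  shows "RR j g = c"
proof -
  have "RR j g \<in> S j \<and> (\<forall>\<phi>\<in>S j. ip j (RR j g) \<phi> = g \<phi>)"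
    unfolding RR_def by (rule someI[of _ c]) (use assms in blast)
  then show ?thesis using ip_unique[of "RR j g" j c] assms by auto
qed

lemma RR_cong: "(\<And>\<phi>. \<phi> \<in> S j \<Longrightarrow> g \<phi> = g' \<phi>) \<Longrightarrow> RR j g = RR j g'"
  unfolding RR_def by (rule arg_cong[where f = Eps]) (auto simp: fun_eq_iff)

lemma llf_add: "llf k l a b (x + y) = llf k l a b x + llf k l a b y"
  by (simp add: llf_def sum.distrib algebra_simps)
lemma llf_sc: "llf k l a b (fsc c x) = c * llf k l a b x"
  by (simp add: llf_def fsc_def sum_distrib_left algebra_simps)

lemma RR_llf: "RR j (llf k l a b) \<in> S j"
  "\<phi> \<in> S j \<Longrightarrow> ip j (RR j (llf k l a b)) \<phi> = llf k l a b \<phi>"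
  using RR_spec[of j "llf k l a b"] by (auto simp: llf_add llf_sc)

lemma ip_eval: "ip j c \<phi> = (\<Sum>y\<in>T j. c y * \<phi> y)" by (simp add: ip_def ipK_def)

lemma RR_slice:
  assumes "\<phi> \<in> S N" "x \<in> T i" "z \<in> T l" "N = i + (k + k') + l"
  shows "(\<Sum>y\<in>T (k + k'). RR (k + k') (llf k k' a b) y * \<phi> (x @ y @ z)) =
         (\<Sum>u\<in>T k. \<Sum>v\<in>T k'. a u * b v * \<phi> (x @ u @ v @ z))"
proof -
  define s where "s = (\<lambda>y. if y \<in> T (k + k') then \<phi> (x @ y @ z) else 0)"
  have sS: "s \<in> S (k + k')" unfolding s_def by (rule S_slice[OF assms])
  have "(\<Sum>y\<in>T (k + k'). RR (k + k') (llf k k' a b) y * \<phi> (x @ y @ z)) = ip (k + k') (RR (k + k') (llf k k' a b)) s"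
    by (simp add: ip_eval s_def)
  also have "\<dots> = llf k k' a b s" using RR_llf(2)[OF sS] .
  also have "\<dots> = (\<Sum>u\<in>T k. \<Sum>v\<in>T k'. a u * b v * \<phi> (x @ u @ v @ z))"
    unfolding llf_def s_def by (intro sum.cong refl) (simp add: T_app)
  finally show ?thesis .
qed

lemma sum_rot3: "(\<Sum>w\<in>C. \<Sum>u\<in>A. \<Sum>v\<in>B. g u v w) = (\<Sum>u\<in>A. \<Sum>v\<in>B. \<Sum>w\<in>C. (g u v w :: rat))"
  by (subst sum.swap) (rule sum.cong[OF refl], rule sum.swap)

lemma sumS1: "(\<Sum>w\<in>C. c w * (\<Sum>u\<in>A. \<Sum>v\<in>B. g u v w)) = (\<Sum>u\<in>A. \<Sum>v\<in>B. \<Sum>w\<in>C. c w * (g u v w :: rat))"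
  by (simp only: sum_distrib_left) (rule sum_rot3)

lemma sumS2: "(\<Sum>u\<in>A. a u * (\<Sum>v\<in>B. \<Sum>w\<in>C. g u v w)) = (\<Sum>u\<in>A. \<Sum>v\<in>B. \<Sum>w\<in>C. a u * (g u v w :: rat))"
  by (simp only: sum_distrib_left)

lemma sumS3: "(\<Sum>x\<in>A. \<Sum>w\<in>C. R x * c w * h x w) = (\<Sum>w\<in>C. c w * (\<Sum>x\<in>A. R x * (h x w :: rat)))"
  by (subst sum.swap) (simp only: sum_distrib_left ac_simps)

lemma sumS4: "(\<Sum>u\<in>A. \<Sum>y\<in>C. a u * R y * h u y) = (\<Sum>u\<in>A. a u * (\<Sum>y\<in>C. R y * (h u y :: rat)))"
  by (simp only: sum_distrib_left ac_simps)

definition G3 where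
  "G3 d1 d2 d3 a b c \<phi> = (\<Sum>u\<in>T d1. \<Sum>v\<in>T d2. \<Sum>w\<in>T d3. a u * b v * c w * \<phi> (u @ v @ w))"

lemma llf_RR_left:
  assumes "\<phi> \<in> S (d1 + d2 + d3)"
  shows "llf (d1 + d2) d3 (RR (d1 + d2) (llf d1 d2 a b)) c \<phi> = G3 d1 d2 d3 a b c \<phi>"
proof -
  have "llf (d1 + d2) d3 (RR (d1 + d2) (llf d1 d2 a b)) c \<phi> =
     (\<Sum>w\<in>T d3. c w * (\<Sum>y\<in>T (d1 + d2). RR (d1 + d2) (llf d1 d2 a b) y * \<phi> ([] @ y @ w)))"
    unfolding llf_def by (simp only: sumS3 append_Nil)
  also have "\<dots> = (\<Sum>w\<in>T d3. c w * (\<Sum>u\<in>T d1. \<Sum>v\<in>T d2. a u * b v * \<phi> ([] @ u @ v @ w)))"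
    by (intro sum.cong refl arg_cong2[where f="(*)"] RR_slice[OF assms]) auto
  also have "\<dots> = G3 d1 d2 d3 a b c \<phi>"
    unfolding G3_def sumS1 by (intro sum.cong refl) (simp add: ac_simps)
  finally show ?thesis .
qed

lemma llf_RR_right:
  assumes "\<phi> \<in> S (d1 + d2 + d3)"
  shows "llf d1 (d2 + d3) a (RR (d2 + d3) (llf d2 d3 b c)) \<phi> = G3 d1 d2 d3 a b c \<phi>"
proof -
  have "llf d1 (d2 + d3) a (RR (d2 + d3) (llf d2 d3 b c)) \<phi> =
     (\<Sum>u\<in>T d1. a u * (\<Sum>y\<in>T (d2 + d3). RR (d2 + d3) (llf d2 d3 b c) y * \<phi> (u @ y @ [])))"
    unfolding llf_def by (simp only: sumS4 append_Nil2)
  also have "\<dots> = (\<Sum>u\<in>T d1. a u * (\<Sum>v\<in>T d2. \<Sum>w\<in>T d3. b v * c w * \<phi> (u @ v @ w @ [])))"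
    by (intro sum.cong refl arg_cong2[where f="(*)"] RR_slice[OF assms]) auto
  also have "\<dots> = G3 d1 d2 d3 a b c \<phi>"
    unfolding G3_def sumS2 by (intro sum.cong refl) (simp add: ac_simps)
  finally show ?thesis .
qed


lemma eps_sq: "eps ^ k * eps ^ k = 1"
  by (simp add: epsp eps2)

lemma S_lam_sum': "(\<And>z. z \<in> Z \<Longrightarrow> (\<lambda>xs. t z xs) \<in> S j) \<Longrightarrow> (\<lambda>xs. \<Sum>z\<in>Z. t z xs) \<in> S j"
  using S_lam_sum[of Z t j "\<lambda>_. 1"] by simp

lemma S_lam_sc: "(\<lambda>xs. t xs) \<in> S j \<Longrightarrow> (\<lambda>xs. c * t xs) \<in> S j"
  using S_fsc[of t j c] by (simp add: fsc_def)

lemma fc_S: assumes "k + l \<le> q" shows "fc k l a b \<in> S (q - (k + l))"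
proof -
  have "fc k l a b = (\<lambda>xs. \<Sum>u\<in>T k. \<Sum>w\<in>T l. a u * b w * (if xs \<in> T (q - (k + l)) then f ((u @ w) @ xs @ []) else 0))"
    by (auto simp: fc_def fun_eq_iff)
  also have "\<dots> \<in> S (q - (k + l))"
  proof (intro S_lam_sum' S_lam_sc)
    fix u w assume "u \<in> T k" "w \<in> T l"
    then have uw: "u @ w \<in> T (k + l)" by (rule T_app)
    show "(\<lambda>xs. if xs \<in> T (q - (k + l)) then f ((u @ w) @ xs @ []) else 0) \<in> S (q - (k + l))"
      by (rule S_slice[OF fS uw]) (use assms in auto)
  qed
  finally show ?thesis .
qed

lemma cr_S: assumes "\<phi> \<in> S j" "k \<le> j" shows "cr k j a \<phi> \<in> S (j - k)"
proof -
  have "cr k j a \<phi> = (\<lambda>xs. \<Sum>u\<in>T k. a u * (if xs \<in> T (j - k) then \<phi> (u @ xs @ []) else 0))"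
    by (auto simp: cr_def fun_eq_iff)
  also have "\<dots> \<in> S (j - k)"
  proof (intro S_lam_sum' S_lam_sc)
    fix u assume u: "u \<in> T k"
    show "(\<lambda>xs. if xs \<in> T (j - k) then \<phi> (u @ xs @ []) else 0) \<in> S (j - k)"
      by (rule S_slice[OF assms(1) u]) (use assms in auto)
  qed
  finally show ?thesis .
qed

lemma ord_le: "d \<le> q \<Longrightarrow> ord d \<le> m" unfolding ord_def using qm by auto

lemma M_S:
  assumes "a \<in> S (ord d1)" "b \<in> S (ord d2)" "d1 + d2 \<le> q"
  shows "M d1 d2 a b \<in> S (ord (d1 + d2))"
proof -
  consider "d1 \<le> m" "d2 \<le> m" "d1 + d2 \<le> m" | "d1 \<le> m" "d2 \<le> m" "\<not> d1 + d2 \<le> m"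
    | "d1 \<le> m" "\<not> d2 \<le> m" | "\<not> d1 \<le> m" by linarith
  then show ?thesis
  proof cases
    case 1 then show ?thesis using assms by (simp add: M_def ord_def RR_llf)
  next
    case 2 then show ?thesis using assms fc_S[of d1 d2 a b] by (simp add: M_def ord_def)
  next
    case 3
    have o: "ord d2 = q - d2" "ord (d1 + d2) = q - d2 - d1" using 3 by (auto simp: ord_def)
    have "cr d1 (q - d2) a b \<in> S (q - d2 - d1)" using 3 assms o qm
      by (intro cr_S) auto
    then show ?thesis using 3 assms o by (auto simp: M_def intro!: S_fsc)
  next
    case 4
    have o: "ord d1 = q - d1" "ord (d1 + d2) = q - d1 - d2" using 4 by (auto simp: ord_def)
    have "cr d2 (q - d1) b a \<in> S (q - d1 - d2)" using 4 assms o qm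
      by (intro cr_S) auto
    then show ?thesis using 4 assms o by (auto simp: M_def)
  qed
qed

lemma M_zero_gt: "q < d1 + d2 \<Longrightarrow> M d1 d2 a b = 0" by (simp add: M_def)

lemma llf_add1: "llf k l (a + a') b \<phi> = llf k l a b \<phi> + llf k l a' b \<phi>"
  by (simp add: llf_def sum.distrib algebra_simps)
lemma llf_add2: "llf k l a (b + b') \<phi> = llf k l a b \<phi> + llf k l a b' \<phi>"
  by (simp add: llf_def sum.distrib algebra_simps)
lemma llf_sc1: "llf k l (fsc c a) b \<phi> = c * llf k l a b \<phi>"
  by (simp add: llf_def fsc_def sum_distrib_left algebra_simps)
lemma llf_sc2: "llf k l a (fsc c b) \<phi> = c * llf k l a b \<phi>"
  by (simp add: llf_def fsc_def sum_distrib_left algebra_simps)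

lemma ip_add1: "ip j (x + y) z = ip j x z + ip j y z" by (simp add: ip_def ipK_add1)
lemma ip_sc1: "ip j (fsc c x) z = c * ip j x z" by (simp add: ip_def ipK_sc1)

lemma RR_add1: "RR j (llf k l (a + a') b) = RR j (llf k l a b) + RR j (llf k l a' b)"
  by (rule RR_eq) (auto simp: RR_llf S_add ip_add1 llf_add1)
lemma RR_add2: "RR j (llf k l a (b + b')) = RR j (llf k l a b) + RR j (llf k l a b')"
  by (rule RR_eq) (auto simp: RR_llf S_add ip_add1 llf_add2)
lemma RR_sc1: "RR j (llf k l (fsc c a) b) = fsc c (RR j (llf k l a b))"
  by (rule RR_eq) (auto simp: RR_llf S_fsc ip_sc1 llf_sc1)
lemma RR_sc2: "RR j (llf k l a (fsc c b)) = fsc c (RR j (llf k l a b))"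
  by (rule RR_eq) (auto simp: RR_llf S_fsc ip_sc1 llf_sc2)

lemma M_add1: "M d1 d2 (a + a') b = M d1 d2 a b + M d1 d2 a' b"
  by (auto simp: M_def RR_add1 fc_def cr_def fsc_def fun_eq_iff sum.distrib algebra_simps)
lemma M_add2: "M d1 d2 a (b + b') = M d1 d2 a b + M d1 d2 a b'"
  by (auto simp: M_def RR_add2 fc_def cr_def fsc_def fun_eq_iff sum.distrib algebra_simps)
lemma M_sc1: "M d1 d2 (fsc c a) b = fsc c (M d1 d2 a b)"
  unfolding M_def RR_sc1 by (auto simp:  fc_def cr_def fsc_def fun_eq_iff sum_distrib_left algebra_simps)
lemma M_sc2: "M d1 d2 a (fsc c b) = fsc c (M d1 d2 a b)"
  unfolding M_def RR_sc2 by (auto simp:  fc_def cr_def fsc_def fun_eq_iff sum_distrib_left algebra_simps)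

lemma fsc_0[simp]: "fsc 0 x = 0" "fsc c 0 = 0" "fsc 1 x = x" by (auto simp: fsc_def fun_eq_iff)

lemma M_zero1[simp]: "M d1 d2 0 b = 0"
  using M_sc1[of d1 d2 0 0 b] by simp
lemma M_zero2[simp]: "M d1 d2 a 0 = 0"
  using M_sc2[of d1 d2 a 0 0] by simp


definition F3 where
  "F3 d1 d2 d3 a b c = (\<lambda>xs. if xs \<in> T (q - (d1 + d2 + d3)) then
     (\<Sum>u\<in>T d1. \<Sum>v\<in>T d2. \<Sum>w\<in>T d3. a u * b v * c w * f (u @ v @ w @ xs)) else 0)"

lemma sumS5: "(\<Sum>w\<in>C. c w * (\<Sum>v\<in>B. b v * h v w)) = (\<Sum>v\<in>B. \<Sum>w\<in>C. b v * c w * (h v w :: rat))"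
  by (simp only: sum_distrib_left) (subst sum.swap, simp only: ac_simps)

lemma fc_RR_left:
  assumes "d1 + d2 + d3 \<le> q"
  shows "fc (d1 + d2) d3 (RR (d1 + d2) (llf d1 d2 a b)) c = F3 d1 d2 d3 a b c"
proof (rule ext)
  fix xs
  show "fc (d1 + d2) d3 (RR (d1 + d2) (llf d1 d2 a b)) c xs = F3 d1 d2 d3 a b c xs"
  proof (cases "xs \<in> T (q - (d1 + d2 + d3))")
    case True
    have "fc (d1 + d2) d3 (RR (d1 + d2) (llf d1 d2 a b)) c xs =
      (\<Sum>w\<in>T d3. c w * (\<Sum>y\<in>T (d1 + d2). RR (d1 + d2) (llf d1 d2 a b) y * f ([] @ y @ (w @ xs))))"
      using True by (simp add: fc_def add.assoc sumS3)
    also have "\<dots> = (\<Sum>w\<in>T d3. c w * (\<Sum>u\<in>T d1. \<Sum>v\<in>T d2. a u * b v * f ([] @ u @ v @ (w @ xs))))"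
      by (intro sum.cong refl arg_cong2[where f="(*)"] RR_slice[OF fS])
         (use True assms in \<open>auto intro: T_app\<close>)
    also have "\<dots> = F3 d1 d2 d3 a b c xs"
      unfolding F3_def sumS1 using True by (auto intro!: sum.cong simp: ac_simps)
    finally show ?thesis .
  qed (simp add: fc_def F3_def add.assoc)
qed

lemma fc_RR_right:
  assumes "d1 + d2 + d3 \<le> q"
  shows "fc d1 (d2 + d3) a (RR (d2 + d3) (llf d2 d3 b c)) = F3 d1 d2 d3 a b c"
proof (rule ext)
  fix xs
  show "fc d1 (d2 + d3) a (RR (d2 + d3) (llf d2 d3 b c)) xs = F3 d1 d2 d3 a b c xs"
  proof (cases "xs \<in> T (q - (d1 + d2 + d3))")
    case True
    have "fc d1 (d2 + d3) a (RR (d2 + d3) (llf d2 d3 b c)) xs =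
      (\<Sum>u\<in>T d1. a u * (\<Sum>y\<in>T (d2 + d3). RR (d2 + d3) (llf d2 d3 b c) y * f (u @ y @ xs)))"
      using True by (simp add: fc_def add.assoc sumS4)
    also have "\<dots> = (\<Sum>u\<in>T d1. a u * (\<Sum>v\<in>T d2. \<Sum>w\<in>T d3. b v * c w * f (u @ v @ w @ xs)))"
      by (intro sum.cong refl arg_cong2[where f="(*)"] RR_slice[OF fS])
         (use True assms in \<open>auto intro: T_app\<close>)
    also have "\<dots> = F3 d1 d2 d3 a b c xs"
      unfolding F3_def sumS2 using True by (auto intro!: sum.cong simp: ac_simps)
    finally show ?thesis .
  qed (simp add: fc_def F3_def add.assoc)
qed

lemma cr_fc_left:
  assumes "d1 + d2 + d3 \<le> q"
  shows "cr d3 (q - (d1 + d2)) c (fc d1 d2 a b) = F3 d1 d2 d3 a b c"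
proof (rule ext)
  fix xs
  have e: "q - (d1 + d2) - d3 = q - (d1 + d2 + d3)" by simp
  show "cr d3 (q - (d1 + d2)) c (fc d1 d2 a b) xs = F3 d1 d2 d3 a b c xs"
  proof (cases "xs \<in> T (q - (d1 + d2 + d3))")
    case True
    have wx: "w \<in> T d3 \<Longrightarrow> w @ xs \<in> T (q - (d1 + d2))" for w
      using T_app[OF _ True, of w d3] assms by (simp add: add.commute)
    have "cr d3 (q - (d1 + d2)) c (fc d1 d2 a b) xs =
      (\<Sum>w\<in>T d3. c w * (\<Sum>u\<in>T d1. \<Sum>v\<in>T d2. a u * b v * f (u @ v @ w @ xs)))"
      using True wx by (auto simp: cr_def fc_def e intro!: sum.cong)
    also have "\<dots> = F3 d1 d2 d3 a b c xs"
      unfolding F3_def sumS1 using True by (auto intro!: sum.cong simp: ac_simps)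
    finally show ?thesis .
  qed (simp add: cr_def F3_def e)
qed

lemma cr_fc_right:
  assumes "d1 + d2 + d3 \<le> q"
  shows "fsc (eps ^ (d1 * (d2 + d3))) (cr d1 (q - (d2 + d3)) a (fc d2 d3 b c)) = F3 d1 d2 d3 a b c"
proof (rule ext)
  fix xs
  have e: "q - (d2 + d3) - d1 = q - (d1 + d2 + d3)" "d2 + d3 + d1 = d1 + d2 + d3" by simp_all
  show "fsc (eps ^ (d1 * (d2 + d3))) (cr d1 (q - (d2 + d3)) a (fc d2 d3 b c)) xs = F3 d1 d2 d3 a b c xs"
  proof (cases "xs \<in> T (q - (d1 + d2 + d3))")
    case True
    have ux: "u \<in> T d1 \<Longrightarrow> u @ xs \<in> T (q - (d2 + d3))" for u
      using T_app[OF _ True, of u d1] assms by (simp add: add.commute)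
    have blk: "f ([] @ (v @ w) @ u @ xs) = eps ^ ((d2 + d3) * d1) * f ([] @ u @ (v @ w) @ xs)"
      if "u \<in> T d1" "v \<in> T d2" "w \<in> T d3" for u v w
    proof -
      have "[] @ (v @ w) @ u @ xs \<in> T q" using that True assms
        by (auto simp: T_def)
      then show ?thesis using S_block[OF fS, of "[]" "v @ w" u xs] that by (simp add: T_length)
    qed
    have "fsc (eps ^ (d1 * (d2 + d3))) (cr d1 (q - (d2 + d3)) a (fc d2 d3 b c)) xs =
      eps ^ (d1 * (d2 + d3)) * (\<Sum>u\<in>T d1. a u * (\<Sum>v\<in>T d2. \<Sum>w\<in>T d3. b v * c w * f ([] @ (v @ w) @ u @ xs)))"
      using True ux by (auto simp: fsc_def cr_def fc_def e intro!: sum.cong)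
    also have "\<dots> = eps ^ (d1 * (d2 + d3)) * (\<Sum>u\<in>T d1. a u * (\<Sum>v\<in>T d2. \<Sum>w\<in>T d3. b v * c w *
         (eps ^ ((d2 + d3) * d1) * f (u @ v @ w @ xs))))"
      using blk by (auto intro!: sum.cong arg_cong2[where f="(*)"])
    also have "\<dots> = (eps ^ (d1 * (d2 + d3)) * eps ^ (d1 * (d2 + d3))) * (\<Sum>u\<in>T d1. a u * (\<Sum>v\<in>T d2. \<Sum>w\<in>T d3. b v * c w *
         f (u @ v @ w @ xs)))"
      by (simp add: sum_distrib_left ac_simps)
    also have "\<dots> = F3 d1 d2 d3 a b c xs"
      unfolding eps_sq F3_def sumS2 using True by (auto intro!: sum.cong simp: ac_simps)
    finally show ?thesis .
  qed (simp add: cr_def F3_def e fsc_def)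
qed


lemma eps_shift: "eps ^ (y + 2 * k) = eps ^ y"
proof -
  have "eps ^ (2 * k) = 1" by (simp add: power_mult power2_eq_square eps2)
  then show ?thesis by (simp add: power_add)
qed

lemma case_B:
  assumes "d1 + d2 + d3 \<le> q" "a \<in> S (q - d1)"
  shows "cr d3 (q - (d1 + d2)) c (cr d2 (q - d1) b a) = cr (d2 + d3) (q - d1) (RR (d2 + d3) (llf d2 d3 b c)) a"
proof (rule ext)
  fix xs
  have e: "q - (d1 + d2) - d3 = q - (d1 + d2 + d3)" "q - d1 - (d2 + d3) = q - (d1 + d2 + d3)" by simp_all
  show "cr d3 (q - (d1 + d2)) c (cr d2 (q - d1) b a) xs = cr (d2 + d3) (q - d1) (RR (d2 + d3) (llf d2 d3 b c)) a xs"
  proof (cases "xs \<in> T (q - (d1 + d2 + d3))")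
    case True
    have wx: "w \<in> T d3 \<Longrightarrow> w @ xs \<in> T (q - d1 - d2)" for w
      using T_app[OF _ True, of w d3] assms by (simp add: add.commute)
    have "cr d3 (q - (d1 + d2)) c (cr d2 (q - d1) b a) xs = (\<Sum>w\<in>T d3. c w * (\<Sum>v\<in>T d2. b v * a (v @ w @ xs)))"
      using True wx by (auto simp: cr_def e intro!: sum.cong)
    also have "\<dots> = (\<Sum>v\<in>T d2. \<Sum>w\<in>T d3. b v * c w * a ([] @ v @ w @ xs))" by (simp add: sumS5)
    also have "\<dots> = (\<Sum>y\<in>T (d2 + d3). RR (d2 + d3) (llf d2 d3 b c) y * a ([] @ y @ xs))"
      by (rule RR_slice[OF assms(2), where i=0 and l="q - (d1 + d2 + d3)", symmetric]) (use True assms in auto)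
    also have "\<dots> = cr (d2 + d3) (q - d1) (RR (d2 + d3) (llf d2 d3 b c)) a xs"
      using True by (simp add: cr_def e add_ac)
    finally show ?thesis .
  qed (simp add: cr_def e add_ac)
qed

lemma case_C:
  assumes "d1 + d2 + d3 \<le> q" "b \<in> S (q - d2)"
  shows "cr d3 (q - (d1 + d2)) c (fsc (eps ^ (d1 * d2)) (cr d1 (q - d2) a b)) =
         fsc (eps ^ (d1 * (d2 + d3))) (cr d1 (q - (d2 + d3)) a (cr d3 (q - d2) c b))"
proof (rule ext)
  fix xs
  have e: "q - (d1 + d2) - d3 = q - (d1 + d2 + d3)" "q - (d2 + d3) - d1 = q - (d1 + d2 + d3)"
    "q - d2 - d1 = q - (d1 + d2)" "q - d2 - d3 = q - (d2 + d3)" "d2 + d1 = d1 + d2" "d3 + d2 = d2 + d3" "d2 + d3 + d1 = d1 + d2 + d3" by simp_all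
  show "cr d3 (q - (d1 + d2)) c (fsc (eps ^ (d1 * d2)) (cr d1 (q - d2) a b)) xs =
         fsc (eps ^ (d1 * (d2 + d3))) (cr d1 (q - (d2 + d3)) a (cr d3 (q - d2) c b)) xs"
  proof (cases "xs \<in> T (q - (d1 + d2 + d3))")
    case True
    have wx: "w \<in> T d3 \<Longrightarrow> w @ xs \<in> T (q - (d1 + d2))" for w
      using T_app[OF _ True, of w d3] assms by (simp add: add.commute)
    have ux: "u \<in> T d1 \<Longrightarrow> u @ xs \<in> T (q - (d2 + d3))" for u
      using T_app[OF _ True, of u d1] assms by (simp add: add.commute)
    have blk: "b ([] @ w @ u @ xs) = eps ^ (d3 * d1) * b ([] @ u @ w @ xs)"
      if "u \<in> T d1" "w \<in> T d3" for u w
    proof -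
      have "[] @ w @ u @ xs \<in> T (q - d2)" using that True assms by (auto simp: T_def)
      then show ?thesis using S_block[OF assms(2), of "[]" w u xs] that by (simp add: T_length)
    qed
    have "cr d3 (q - (d1 + d2)) c (fsc (eps ^ (d1 * d2)) (cr d1 (q - d2) a b)) xs =
       (\<Sum>w\<in>T d3. c w * (eps ^ (d1 * d2) * (\<Sum>u\<in>T d1. a u * b (u @ w @ xs))))"
      using True wx by (auto simp: cr_def fsc_def e intro!: sum.cong)
    also have "\<dots> = eps ^ (d1 * d2) * (\<Sum>u\<in>T d1. \<Sum>w\<in>T d3. a u * c w * b (u @ w @ xs))"
      by (simp add: sum_distrib_left ac_simps) (rule sum.swap)
    also have "\<dots> = eps ^ (d1 * (d2 + d3)) * (\<Sum>u\<in>T d1. a u * (\<Sum>w\<in>T d3. c w * b ([] @ w @ u @ xs)))"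
    proof -
      have "eps ^ (d1 * (d2 + d3)) * (\<Sum>u\<in>T d1. a u * (\<Sum>w\<in>T d3. c w * b ([] @ w @ u @ xs))) =
        eps ^ (d1 * (d2 + d3)) * (\<Sum>u\<in>T d1. a u * (\<Sum>w\<in>T d3. c w * (eps ^ (d3 * d1) * b ([] @ u @ w @ xs))))"
        using blk by (auto intro!: sum.cong arg_cong2[where f="(*)"])
      also have "\<dots> = eps ^ (d1 * (d2 + d3) + d3 * d1) * (\<Sum>u\<in>T d1. \<Sum>w\<in>T d3. a u * c w * b (u @ w @ xs))"
        by (simp add: power_add sum_distrib_left ac_simps)
      also have "d1 * (d2 + d3) + d3 * d1 = d1 * d2 + 2 * (d1 * d3)" by (simp add: algebra_simps)
      finally show ?thesis by (simp add: eps_shift)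
    qed
    also have "\<dots> = fsc (eps ^ (d1 * (d2 + d3))) (cr d1 (q - (d2 + d3)) a (cr d3 (q - d2) c b)) xs"
      using True ux by (auto simp: cr_def fsc_def e add_ac intro!: sum.cong)
    finally show ?thesis .
  qed (simp add: cr_def fsc_def e add_ac)
qed

lemma case_D:
  assumes "d1 + d2 + d3 \<le> q" "c \<in> S (q - d3)"
  shows "fsc (eps ^ ((d1 + d2) * d3)) (cr (d1 + d2) (q - d3) (RR (d1 + d2) (llf d1 d2 a b)) c) =
         fsc (eps ^ (d1 * (d2 + d3))) (cr d1 (q - (d2 + d3)) a (fsc (eps ^ (d2 * d3)) (cr d2 (q - d3) b c)))"
proof (rule ext)
  fix xs
  have e: "q - d3 - (d1 + d2) = q - (d1 + d2 + d3)" "q - (d2 + d3) - d1 = q - (d1 + d2 + d3)"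
    "q - d3 - d2 = q - (d2 + d3)" "d3 + (d1 + d2) = d1 + d2 + d3" "d3 + d2 = d2 + d3" by simp_all
  show "fsc (eps ^ ((d1 + d2) * d3)) (cr (d1 + d2) (q - d3) (RR (d1 + d2) (llf d1 d2 a b)) c) xs =
         fsc (eps ^ (d1 * (d2 + d3))) (cr d1 (q - (d2 + d3)) a (fsc (eps ^ (d2 * d3)) (cr d2 (q - d3) b c))) xs"
  proof (cases "xs \<in> T (q - (d1 + d2 + d3))")
    case True
    have ux: "u \<in> T d1 \<Longrightarrow> u @ xs \<in> T (q - (d2 + d3))" for u
      using T_app[OF _ True, of u d1] assms by (simp add: add.commute)
    have blk: "c ([] @ v @ u @ xs) = eps ^ (d2 * d1) * c ([] @ u @ v @ xs)"
      if "u \<in> T d1" "v \<in> T d2" for u v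
    proof -
      have "[] @ v @ u @ xs \<in> T (q - d3)" using that True assms by (auto simp: T_def)
      then show ?thesis using S_block[OF assms(2), of "[]" v u xs] that by (simp add: T_length)
    qed
    have "fsc (eps ^ ((d1 + d2) * d3)) (cr (d1 + d2) (q - d3) (RR (d1 + d2) (llf d1 d2 a b)) c) xs =
      eps ^ ((d1 + d2) * d3) * (\<Sum>y\<in>T (d1 + d2). RR (d1 + d2) (llf d1 d2 a b) y * c ([] @ y @ xs))"
      using True by (simp add: cr_def fsc_def e)
    also have "\<dots> = eps ^ ((d1 + d2) * d3) * (\<Sum>u\<in>T d1. \<Sum>v\<in>T d2. a u * b v * c ([] @ u @ v @ xs))"
      by (subst RR_slice[OF assms(2), where i=0 and l="q - (d1 + d2 + d3)"]) (use True assms in auto)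
    also have "\<dots> = eps ^ (d1 * (d2 + d3)) * (\<Sum>u\<in>T d1. a u * (eps ^ (d2 * d3) * (\<Sum>v\<in>T d2. b v * c ([] @ v @ u @ xs))))"
    proof -
      have "eps ^ (d1 * (d2 + d3)) * (\<Sum>u\<in>T d1. a u * (eps ^ (d2 * d3) * (\<Sum>v\<in>T d2. b v * c ([] @ v @ u @ xs)))) =
        eps ^ (d1 * (d2 + d3)) * (\<Sum>u\<in>T d1. a u * (eps ^ (d2 * d3) * (\<Sum>v\<in>T d2. b v * (eps ^ (d2 * d1) * c ([] @ u @ v @ xs)))))"
        using blk by (auto intro!: sum.cong arg_cong2[where f="(*)"])
      also have "\<dots> = eps ^ (d1 * (d2 + d3) + d2 * d3 + d2 * d1) * (\<Sum>u\<in>T d1. \<Sum>v\<in>T d2. a u * b v * c (u @ v @ xs))"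
        by (simp add: power_add sum_distrib_left ac_simps)
      also have "d1 * (d2 + d3) + d2 * d3 + d2 * d1 = (d1 + d2) * d3 + 2 * (d1 * d2)" by (simp add: algebra_simps)
      finally show ?thesis by (simp add: eps_shift)
    qed
    also have "\<dots> = fsc (eps ^ (d1 * (d2 + d3))) (cr d1 (q - (d2 + d3)) a (fsc (eps ^ (d2 * d3)) (cr d2 (q - d3) b c))) xs"
      using True ux by (auto simp: cr_def fsc_def e add_ac intro!: sum.cong)
    finally show ?thesis .
  qed (simp add: cr_def fsc_def e add_ac)
qed


lemma M_assoc:
  assumes a: "a \<in> S (ord d1)" and b: "b \<in> S (ord d2)" and c: "c \<in> S (ord d3)"
  shows "M (d1 + d2) d3 (M d1 d2 a b) c = M d1 (d2 + d3) a (M d2 d3 b c)"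
proof (cases "q < d1 + d2 + d3")
  case True
  then show ?thesis by (simp add: M_zero_gt add.assoc)
next
  case False
  then have s: "d1 + d2 + d3 \<le> q" by simp
  consider "d1 \<le> m" "d2 \<le> m" "d3 \<le> m" | "\<not> d1 \<le> m" | "\<not> d2 \<le> m" | "\<not> d3 \<le> m" by blast
  then show ?thesis
  proof cases
    case 1
    have a': "a \<in> S d1" and b': "b \<in> S d2" and c': "c \<in> S d3" using 1 a b c by (auto simp: ord_def)
    show ?thesis
    proof (cases "d1 + d2 + d3 \<le> m")
      case True
      have L: "M (d1 + d2) d3 (M d1 d2 a b) c = RR (d1 + d2 + d3) (G3 d1 d2 d3 a b c)"
        using True s by (simp add: M_def llf_RR_left cong: RR_cong)
      have R: "M d1 (d2 + d3) a (M d2 d3 b c) = RR (d1 + (d2 + d3)) (G3 d1 d2 d3 a b c)"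
        using True s by (simp add: M_def llf_RR_right[simplified add.assoc] cong: RR_cong)
      show ?thesis using L R by (simp add: add.assoc)
    next
      case False
      have L: "M (d1 + d2) d3 (M d1 d2 a b) c = F3 d1 d2 d3 a b c"
      proof (cases "d1 + d2 \<le> m")
        case True
        then show ?thesis using False s 1 by (simp add: M_def fc_RR_left)
      next
        case False2: False
        then show ?thesis using False s 1 by (simp add: M_def cr_fc_left)
      qed
      have R: "M d1 (d2 + d3) a (M d2 d3 b c) = F3 d1 d2 d3 a b c"
      proof (cases "d2 + d3 \<le> m")
        case True
        then show ?thesis using False s 1 by (simp add: M_def fc_RR_right add.assoc)
      next
        case False2: False
        then show ?thesis using False s 1 by (simp add: M_def cr_fc_right add.assoc)
      qed
      show ?thesis using L R by simp
    qed
  next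
    case 2
    have o: "d2 + d3 \<le> m" "d2 \<le> m" "d3 \<le> m" using 2 s qm by auto
    have a': "a \<in> S (q - d1)" using 2 a by (auto simp: ord_def)
    show ?thesis using 2 o s case_B[OF s a'] by (simp add: M_def add.assoc)
  next
    case 3
    have o: "d1 + d3 \<le> m" "d1 \<le> m" "d3 \<le> m" using 3 s qm by auto
    have b': "b \<in> S (q - d2)" using 3 b by (auto simp: ord_def)
    show ?thesis using 3 o s case_C[OF s b'] by (simp add: M_def add.assoc)
  next
    case 4
    have o: "d1 + d2 \<le> m" "d1 \<le> m" "d2 \<le> m" using 4 s qm by auto
    have c': "c \<in> S (q - d3)" using 4 c by (auto simp: ord_def)
    show ?thesis using 4 o s case_D[OF s c'] by (simp add: M_def add.assoc)
  qed
qed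


lemma fsc_fsc: "fsc a (fsc b x) = fsc (a * b) x" by (simp add: fsc_def fun_eq_iff)

lemma M_comm:
  assumes a: "a \<in> S (ord d1)" and b: "b \<in> S (ord d2)"
  shows "M d1 d2 a b = fsc (eps ^ (d1 * d2)) (M d2 d1 b a)"
proof (cases "q < d1 + d2")
  case True then show ?thesis by (simp add: M_def)
next
  case False
  then have s: "d1 + d2 \<le> q" by simp
  have ee: "eps ^ (d1 * d2) * eps ^ (d2 * d1) = 1" using eps_sq[of "d1 * d2"] by (simp add: mult.commute)
  consider "d1 \<le> m" "d2 \<le> m" "d1 + d2 \<le> m" | "d1 \<le> m" "d2 \<le> m" "\<not> d1 + d2 \<le> m"
    | "d1 \<le> m" "\<not> d2 \<le> m" | "\<not> d1 \<le> m" by linarith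
  then show ?thesis
  proof cases
    case 1
    have "RR (d1 + d2) (llf d1 d2 a b) = fsc (eps ^ (d1 * d2)) (RR (d1 + d2) (llf d2 d1 b a))"
    proof (rule RR_eq)
      show "fsc (eps ^ (d1 * d2)) (RR (d1 + d2) (llf d2 d1 b a)) \<in> S (d1 + d2)"
        by (intro S_fsc RR_llf)
      show "\<forall>\<phi>\<in>S (d1 + d2). ip (d1 + d2) (fsc (eps ^ (d1 * d2)) (RR (d1 + d2) (llf d2 d1 b a))) \<phi> = llf d1 d2 a b \<phi>"
      proof
        fix \<phi> assume phi: "\<phi> \<in> S (d1 + d2)"
        have "llf d2 d1 b a \<phi> = (\<Sum>v\<in>T d2. \<Sum>u\<in>T d1. b v * a u * (eps ^ (d2 * d1) * \<phi> (u @ v)))"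
          unfolding llf_def
        proof (intro sum.cong refl arg_cong2[where f="(*)"])
          fix v u assume "v \<in> T d2" "u \<in> T d1"
          then show "\<phi> (v @ u) = eps ^ (d2 * d1) * \<phi> (u @ v)"
            using S_block[OF phi, of "[]" v u "[]"] by (auto simp: T_def)
        qed
        also have "\<dots> = eps ^ (d2 * d1) * llf d1 d2 a b \<phi>"
          unfolding llf_def by (subst sum.swap) (simp add: sum_distrib_left ac_simps)
        finally show "ip (d1 + d2) (fsc (eps ^ (d1 * d2)) (RR (d1 + d2) (llf d2 d1 b a))) \<phi> = llf d1 d2 a b \<phi>"
          using RR_llf(2)[of \<phi> "d1 + d2" d2 d1 b a] phi ee by (simp add: ip_sc1 mult.assoc[symmetric])
      qed
    qed
    then show ?thesis using 1 s by (simp add: M_def add.commute)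
  next
    case 2
    have "fc d1 d2 a b = fsc (eps ^ (d1 * d2)) (fc d2 d1 b a)"
    proof (rule ext)
      fix xs
      show "fc d1 d2 a b xs = fsc (eps ^ (d1 * d2)) (fc d2 d1 b a) xs"
      proof (cases "xs \<in> T (q - (d1 + d2))")
        case True
        have "fc d2 d1 b a xs = (\<Sum>v\<in>T d2. \<Sum>u\<in>T d1. b v * a u * (eps ^ (d2 * d1) * f (u @ v @ xs)))"
          unfolding fc_def using True
        proof (simp add: add.commute, intro sum.cong refl arg_cong2[where f="(*)"])
          fix v u assume "v \<in> T d2" "u \<in> T d1"
          then show "f (v @ u @ xs) = eps ^ (d2 * d1) * f (u @ v @ xs)"
            using S_block[OF fS, of "[]" v u xs] True s by (auto simp: T_def)
        qed
        also have "\<dots> = eps ^ (d2 * d1) * fc d1 d2 a b xs"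
          unfolding fc_def using True by (subst sum.swap) (simp add: sum_distrib_left ac_simps)
        finally show ?thesis using ee by (simp add: fsc_def mult.assoc[symmetric])
      qed (simp add: fc_def fsc_def add.commute)
    qed
    then show ?thesis using 2 s by (simp add: M_def add.commute)
  next
    case 3
    then show ?thesis using s by (simp add: M_def add.commute mult.commute)
  next
    case 4
    then have "d2 \<le> m" using s qm by simp
    then show ?thesis using 4 s ee by (simp add: M_def add.commute fsc_fsc mult.commute)
  qed
qed

definition e0 :: "nat list \<Rightarrow> rat" where "e0 = (\<lambda>xs. if xs = [] then 1 else 0)"

lemma e0_S: "e0 \<in> S 0" by (auto simp: S_def e0_def)

lemma M_unit1: assumes "a \<in> S (ord d)" "d \<le> q" shows "M 0 d e0 a = a"
proof (cases "d \<le> m")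
  case True
  then have a: "a \<in> S d" using assms by (simp add: ord_def)
  have "RR d (llf 0 d e0 a) = a"
    by (rule RR_eq[OF a]) (simp add: llf_def e0_def ip_eval)
  then show ?thesis using True assms by (simp add: M_def)
next
  case False
  then have a: "a \<in> S (q - d)" using assms by (simp add: ord_def)
  show ?thesis using False assms a
    by (auto simp: M_def cr_def e0_def fun_eq_iff S_supp)
qed

lemma M_unit2: assumes "a \<in> S (ord d)" "d \<le> q" shows "M d 0 a e0 = a"
proof (cases "d \<le> m")
  case True
  then have a: "a \<in> S d" using assms by (simp add: ord_def)
  have "RR d (llf d 0 a e0) = a"
    by (rule RR_eq[OF a]) (simp add: llf_def e0_def ip_eval)
  then show ?thesis using True assms by (simp add: M_def)
next
  case False
  then have a: "a \<in> S (q - d)" using assms by (simp add: ord_def)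
  show ?thesis using False assms a
    by (auto simp: M_def cr_def e0_def fun_eq_iff S_supp)
qed

lemma ord_sym: "d \<le> q \<Longrightarrow> ord (q - d) = ord d"
  unfolding ord_def using qm by auto

lemma M_pair:
  assumes "d \<le> q"
  shows "M d (q - d) a b = (\<lambda>xs. if xs = [] then (if d \<le> m then eps ^ (d * (q - d)) else 1) * ip (ord d) a b else 0)"
proof (cases "d \<le> m")
  case True
  then have "\<not> q - d \<le> m" using qm by simp
  then show ?thesis using True assms
    by (auto simp: M_def cr_def fsc_def ip_eval ord_def fun_eq_iff T_def)
next
  case False
  then have "q - d \<le> m" using qm by simp
  then show ?thesis using False assms
    by (auto simp: M_def cr_def fsc_def ip_eval ord_def fun_eq_iff T_def mult.commute)
qed

end


lemma sum_rot3g: "(\<Sum>w\<in>C. \<Sum>u\<in>A. \<Sum>v\<in>B. g u v w) = (\<Sum>u\<in>A. \<Sum>v\<in>B. \<Sum>w\<in>C. (g u v w :: 'a::comm_monoid_add))"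
  by (subst sum.swap) (rule sum.cong[OF refl], rule sum.swap)

context alg begin

definition cmp :: "nat \<Rightarrow> qvec \<Rightarrow> (nat list \<Rightarrow> rat)" where
  "cmp d x = (\<lambda>xs. x (list_encode (d # xs)))"

definition emb :: "nat \<Rightarrow> (nat list \<Rightarrow> rat) \<Rightarrow> qvec" where
  "emb d t = (\<lambda>N. case list_decode N of [] \<Rightarrow> 0 | d' # xs \<Rightarrow> if d' = d \<and> d \<le> q then t xs else 0)"

definition amul :: "qvec \<Rightarrow> qvec \<Rightarrow> qvec" where
  "amul x y = (\<Sum>d1\<le>q. \<Sum>d2\<le>q. emb (d1 + d2) (M d1 d2 (cmp d1 x) (cmp d2 y)))"

definition one :: qvec where "one = emb 0 e0"

lemma cmp_emb: "cmp d (emb d' t) = (if d = d' \<and> d' \<le> q then t else 0)"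
  by (auto simp: cmp_def emb_def fun_eq_iff)

lemma emb_gt: "q < d \<Longrightarrow> emb d t = 0"
  by (auto simp: emb_def fun_eq_iff split: list.split)

lemma emb_add: "emb d (s + t) = emb d s + emb d t"
  by (auto simp: emb_def fun_eq_iff split: list.split)
lemma emb_fsc: "emb d (fsc c t) = fsc c (emb d t)"
  by (auto simp: emb_def fun_eq_iff fsc_def split: list.split)
lemma emb_0[simp]: "emb d 0 = 0"
  by (auto simp: emb_def fun_eq_iff split: list.split)
lemma emb_sum: "emb d (sum t I) = (\<Sum>i\<in>I. emb d (t i))"
  by (auto simp: emb_def fun_eq_iff sum_fun_apply split: list.split)

lemma cmp_add: "cmp d (x + y) = cmp d x + cmp d y" by (simp add: cmp_def fun_eq_iff)
lemma cmp_fsc: "cmp d (fsc c x) = fsc c (cmp d x)" by (simp add: cmp_def fsc_def fun_eq_iff)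
lemma cmp_0[simp]: "cmp d 0 = 0" by (simp add: cmp_def fun_eq_iff)
lemma cmp_sum: "cmp d (sum x I) = (\<Sum>i\<in>I. cmp d (x i))"
  by (auto simp: cmp_def fun_eq_iff sum_fun_apply)

lemma emb_inj: "d \<le> q \<Longrightarrow> emb d s = emb d t \<Longrightarrow> s = t"
  by (metis cmp_emb)

lemma amul_emb: "amul (emb d1 a) (emb d2 b) = emb (d1 + d2) (M d1 d2 a b)"
proof (cases "d1 \<le> q \<and> d2 \<le> q")
  case True
  have "amul (emb d1 a) (emb d2 b) =
     (\<Sum>e1\<le>q. \<Sum>e2\<le>q. if e1 = d1 then (if e2 = d2 then emb (d1 + d2) (M d1 d2 a b) else 0) else 0)"
    unfolding amul_def cmp_emb using True by (intro sum.cong refl) auto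
  also have "\<dots> = (\<Sum>e1\<le>q. if e1 = d1 then emb (d1 + d2) (M d1 d2 a b) else 0)"
    using True by (intro sum.cong refl) (simp add: sum.delta)
  also have "\<dots> = emb (d1 + d2) (M d1 d2 a b)" using True by (simp add: sum.delta)
  finally show ?thesis .
next
  case False
  have "amul (emb d1 a) (emb d2 b) = 0"
    unfolding amul_def cmp_emb using False by (intro sum.neutral ballI) auto
  moreover have "M d1 d2 a b = 0" using False by (intro M_zero_gt) auto
  ultimately show ?thesis by simp
qed

lemma amul_add1: "amul (x + y) z = amul x z + amul y z"
  by (simp add: amul_def cmp_add M_add1 emb_add sum.distrib)
lemma amul_add2: "amul z (x + y) = amul z x + amul z y"
  by (simp add: amul_def cmp_add M_add2 emb_add sum.distrib)
lemma fsc_sum: "fsc c (sum x I) = (\<Sum>i\<in>I. fsc c (x i))"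
  by (auto simp: fsc_def fun_eq_iff sum_fun_apply sum_distrib_left)
lemma amul_fsc1: "amul (fsc c x) z = fsc c (amul x z)"
  by (simp add: amul_def cmp_fsc M_sc1 emb_fsc fsc_sum)
lemma amul_fsc2: "amul z (fsc c x) = fsc c (amul z x)"
  by (simp add: amul_def cmp_fsc M_sc2 emb_fsc fsc_sum)
lemma amul_zero[simp]: "amul 0 z = 0" "amul z 0 = 0"
  by (simp_all add: amul_def)
lemma amul_sum1: "amul (sum x I) z = (\<Sum>i\<in>I. amul (x i) z)"
proof (cases "finite I")
  case True then show ?thesis
    by (rule finite_induct[where P="\<lambda>I. amul (sum x I) z = (\<Sum>i\<in>I. amul (x i) z)"])
       (simp_all add: amul_add1)
qed simp
lemma amul_sum2: "amul z (sum x I) = (\<Sum>i\<in>I. amul z (x i))"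
proof (cases "finite I")
  case True then show ?thesis
    by (rule finite_induct[where P="\<lambda>I. amul z (sum x I) = (\<Sum>i\<in>I. amul z (x i))"])
       (simp_all add: amul_add2)
qed simp

definition Hom :: "qvec set" where
  "Hom = {x. x = (\<Sum>d\<le>q. emb d (cmp d x)) \<and> (\<forall>d\<le>q. cmp d x \<in> S (ord d))}"

lemma Hom_0: "0 \<in> Hom" by (simp add: Hom_def)
lemma Hom_add: "x \<in> Hom \<Longrightarrow> y \<in> Hom \<Longrightarrow> x + y \<in> Hom"
  unfolding Hom_def by (auto simp: cmp_add emb_add sum.distrib S_add)
lemma Hom_sum: "(\<And>i. i \<in> I \<Longrightarrow> x i \<in> Hom) \<Longrightarrow> sum x I \<in> Hom"
proof (cases "finite I")
  case True then show "(\<And>i. i \<in> I \<Longrightarrow> x i \<in> Hom) \<Longrightarrow> sum x I \<in> Hom"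
    by (rule finite_induct[where P="\<lambda>I. (\<forall>i\<in>I. x i \<in> Hom) \<longrightarrow> sum x I \<in> Hom", rule_format])
       (simp_all add: Hom_0 Hom_add)
qed (simp add: Hom_0)
lemma Hom_emb: assumes "t \<in> S (ord d)" "d \<le> q" shows "emb d t \<in> Hom"
proof -
  have "(\<Sum>da\<le>q. emb da (if da = d \<and> d \<le> q then t else 0)) = (\<Sum>da\<le>q. if da = d then emb d t else 0)"
    by (intro sum.cong refl) auto
  also have "\<dots> = emb d t" using assms by (simp add: sum.delta)
  finally show ?thesis using assms by (simp add: Hom_def cmp_emb)
qed

lemma Hom_decomp: "x \<in> Hom \<Longrightarrow> x = (\<Sum>d\<le>q. emb d (cmp d x))" by (simp add: Hom_def)
lemma Hom_cmp: "x \<in> Hom \<Longrightarrow> d \<le> q \<Longrightarrow> cmp d x \<in> S (ord d)" by (simp add: Hom_def)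

lemma amul_emb_Hom1: assumes "z \<in> Hom"
  shows "amul (emb e X) z = (\<Sum>d\<le>q. emb (e + d) (M e d X (cmp d z)))"
proof -
  have "amul (emb e X) z = amul (emb e X) (\<Sum>d\<le>q. emb d (cmp d z))"
    by (rule arg_cong[OF Hom_decomp[OF assms]])
  then show ?thesis by (simp add: amul_sum2 amul_emb)
qed

lemma amul_emb_Hom2: assumes "x \<in> Hom"
  shows "amul x (emb e Y) = (\<Sum>d\<le>q. emb (d + e) (M d e (cmp d x) Y))"
proof -
  have "amul x (emb e Y) = amul (\<Sum>d\<le>q. emb d (cmp d x)) (emb e Y)"
    by (rule arg_cong[OF Hom_decomp[OF assms], where f="\<lambda>u. amul u (emb e Y)"])
  then show ?thesis by (simp add: amul_sum1 amul_emb)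
qed

lemma assoc_Hom:
  assumes x: "x \<in> Hom" and y: "y \<in> Hom" and z: "z \<in> Hom"
  shows "amul (amul x y) z = amul x (amul y z)"
proof -
  have "amul (amul x y) z = (\<Sum>d1\<le>q. \<Sum>d2\<le>q. \<Sum>d3\<le>q.
      emb (d1 + d2 + d3) (M (d1 + d2) d3 (M d1 d2 (cmp d1 x) (cmp d2 y)) (cmp d3 z)))"
    unfolding amul_def[of x y] amul_sum1 amul_emb_Hom1[OF z] ..
  also have "\<dots> = (\<Sum>d1\<le>q. \<Sum>d2\<le>q. \<Sum>d3\<le>q.
      emb (d1 + (d2 + d3)) (M d1 (d2 + d3) (cmp d1 x) (M d2 d3 (cmp d2 y) (cmp d3 z))))"
    using x y z by (intro sum.cong refl) (simp add: M_assoc Hom_cmp add.assoc)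
  also have "\<dots> = amul x (amul y z)"
    unfolding amul_def[of y z] amul_sum2 amul_emb_Hom2[OF x] by (rule sum_rot3g)
  finally show ?thesis .
qed

end


locale alg2 = alg +
  fixes p :: nat
  assumes p0: "0 < p" and epsdef: "eps = (-1) ^ p"
begin

definition G :: "nat \<Rightarrow> qvec set" where
  "G i = (if p dvd i \<and> i div p \<le> q then emb (i div p) ` S (ord (i div p)) else {0})"

definition Aset :: "qvec set" where
  "Aset = {(\<Sum>i\<in>I. x i) | I x. finite I \<and> (\<forall>i\<in>I. x i \<in> G i)}"

definition epsm :: "qvec \<Rightarrow> rat" where "epsm x = x (list_encode [q])"

lemma G_pd: "d \<le> q \<Longrightarrow> G (p * d) = emb d ` S (ord d)"
  using p0 by (simp add: G_def)

lemma G_zero: assumes "\<And>d. d \<le> q \<Longrightarrow> i \<noteq> p * d" shows "G i = {0}"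
proof -
  have nd: "\<not> (p dvd i \<and> i div p \<le> q)"
  proof
    assume h: "p dvd i \<and> i div p \<le> q"
    then obtain k where k: "i = p * k" by (auto elim: dvdE)
    then have "i div p = k" using p0 by simp
    then show False using h k assms by auto
  qed
  show ?thesis unfolding G_def by (rule if_not_P[OF nd])
qed

lemma zero_G: "0 \<in> G i"
  unfolding G_def by (auto intro: image_eqI[where x=0])

lemma G_elim:
  assumes "x \<in> G i"
  obtains "x = 0" | d t where "d \<le> q" "i = p * d" "t \<in> S (ord d)" "x = emb d t"
  using assms p0 unfolding G_def by (auto split: if_splits elim!: dvdE)

lemma G_Hom: "x \<in> G i \<Longrightarrow> x \<in> Hom"
  by (erule G_elim) (auto simp: Hom_0 Hom_emb)

lemma Aset_Hom: "x \<in> Aset \<Longrightarrow> x \<in> Hom"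
  unfolding Aset_def
proof (elim CollectE exE conjE)
  fix I y assume "x = sum y I" "finite I" "\<forall>i\<in>I. y i \<in> G i"
  then show "x \<in> Hom" using G_Hom by (auto intro!: Hom_sum)
qed

lemma G_subspace: "module.subspace qscale (G i)"
proof -
  have "fv.subspace (emb d ` S (ord d))" for d
    unfolding fv.subspace_def
  proof (intro conjI ballI allI)
    show "0 \<in> emb d ` S (ord d)" using emb_0 S_zero by (metis image_eqI)
  next
    fix x y assume "x \<in> emb d ` S (ord d)" "y \<in> emb d ` S (ord d)"
    then show "x + y \<in> emb d ` S (ord d)" by (auto simp: emb_add[symmetric] intro!: imageI S_add)
  next
    fix c x assume "x \<in> emb d ` S (ord d)"
    then show "fsc c x \<in> emb d ` S (ord d)" by (auto simp: emb_fsc[symmetric] intro!: imageI S_fsc)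
  qed
  moreover have "fv.subspace {0::qvec}"
    unfolding fv.subspace_def by simp
  ultimately show ?thesis unfolding qscale_fsc G_def by simp
qed

lemma vs_q: "vector_space qscale"
  unfolding qscale_fsc by unfold_locales (auto simp: fsc_def fun_eq_iff algebra_simps)

lemma indep:
  assumes "finite I" "\<forall>i\<in>I. x i \<in> G i" "(\<Sum>i\<in>I. x i) = 0"
  shows "\<forall>i\<in>I. x i = 0"
proof
  fix i assume i: "i \<in> I"
  show "x i = 0"
  proof (rule G_elim[of "x i" i])
    show "x i \<in> G i" using assms i by blast
  next
    fix d t assume d: "d \<le> q" "i = p * d" "t \<in> S (ord d)" "x i = emb d t"
    have other: "cmp d (x j) = 0" if "j \<in> I" "j \<noteq> i" for j
    proof (rule G_elim[of "x j" j])
      show "x j \<in> G j" using assms that by blast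
    next
      fix d' t' assume "d' \<le> q" "j = p * d'" "t' \<in> S (ord d')" "x j = emb d' t'"
      then show ?thesis using that d by (auto simp: cmp_emb)
    qed simp
    have "0 = cmp d (\<Sum>j\<in>I. x j)" using assms(3) by simp
    also have "\<dots> = (\<Sum>j\<in>I. if j = i then t else 0)"
      unfolding cmp_sum using other d by (intro sum.cong refl) (auto simp: cmp_emb)
    also have "\<dots> = t" using i assms(1) by simp
    finally show ?thesis using d by simp
  qed
qed

lemma one_ne: "one \<noteq> 0"
proof
  assume "one = 0"
  then have "cmp 0 one [] = 0" by simp
  then show False by (simp add: one_def cmp_emb e0_def)
qed

lemma S0_eq: "t \<in> S 0 \<Longrightarrow> t = fsc (t []) e0"
  by (auto simp: fun_eq_iff fsc_def e0_def S_def)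

lemma ord0: "ord 0 = 0" by (simp add: ord_def)
lemma ordq: "ord q = 0" unfolding ord_def using qm by simp

lemma G0: "G 0 = {qscale k one | k. True}"
proof -
  have "G 0 = emb 0 ` S 0" using G_pd[of 0] by (simp add: ord0)
  also have "\<dots> = {qscale k one | k. True}"
  proof
    show "emb 0 ` S 0 \<subseteq> {qscale k one |k. True}"
      using S0_eq by (auto simp: qscale_fsc one_def emb_fsc[symmetric]) (metis)
    show "{qscale k one |k. True} \<subseteq> emb 0 ` S 0"
      by (auto simp: qscale_fsc one_def emb_fsc[symmetric] intro!: imageI S_fsc e0_S)
  qed
  finally show ?thesis .
qed

lemma unit_Hom: "x \<in> Hom \<Longrightarrow> amul one x = x \<and> amul x one = x"
proof -
  assume x: "x \<in> Hom"
  have "amul one x = (\<Sum>d\<le>q. emb d (cmp d x))"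
    unfolding one_def amul_emb_Hom1[OF x] using x by (intro sum.cong refl) (simp add: M_unit1 Hom_cmp)
  moreover have "amul x one = (\<Sum>d\<le>q. emb d (cmp d x))"
    unfolding one_def amul_emb_Hom2[OF x] using x by (intro sum.cong refl) (simp add: M_unit2 Hom_cmp)
  ultimately show ?thesis using Hom_decomp[OF x] by simp
qed

lemma grading: "a \<in> G r \<Longrightarrow> b \<in> G s \<Longrightarrow> amul a b \<in> G (r + s)"
proof (erule G_elim, simp add: zero_G)
  fix d t assume d: "d \<le> q" "r = p * d" "t \<in> S (ord d)" "a = emb d t" and b: "b \<in> G s"
  show "amul a b \<in> G (r + s)"
  proof (rule G_elim[OF b])
    assume "b = 0" then show ?thesis by (simp add: zero_G)
  next
    fix d' t' assume d': "d' \<le> q" "s = p * d'" "t' \<in> S (ord d')" "b = emb d' t'"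
    show ?thesis
    proof (cases "d + d' \<le> q")
      case True
      then have "amul a b \<in> emb (d + d') ` S (ord (d + d'))"
        using d d' by (auto simp: amul_emb intro!: imageI M_S)
      then show ?thesis using G_pd[OF True] d d' by (simp add: distrib_left)
    next
      case False
      then show ?thesis using d d' by (simp add: amul_emb M_zero_gt zero_G)
    qed
  qed
qed

lemma eps_p: "eps ^ (p * k) = eps ^ k"
proof -
  have "eps ^ p = eps" using epsp[of p] by (cases "even p") (auto simp: epsdef)
  then show ?thesis by (simp add: power_mult)
qed

lemma sign: "(-1::rat) ^ (p * d1 * (p * d2)) = eps ^ (d1 * d2)"
proof -
  have e1: "p * d1 * (p * d2) = p * (p * (d1 * d2))" by (simp add: ac_simps)
  have "(-1::rat) ^ (p * d1 * (p * d2)) = ((-1) ^ p) ^ (p * (d1 * d2))"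
    by (simp only: e1 power_mult)
  then have "(-1::rat) ^ (p * d1 * (p * d2)) = eps ^ (p * (d1 * d2))" by (simp add: epsdef)
  then show ?thesis by (simp add: eps_p)
qed

lemma comm: "a \<in> G r \<Longrightarrow> b \<in> G s \<Longrightarrow> amul a b = qscale ((-1) ^ (r * s)) (amul b a)"
proof (erule G_elim, simp add: qscale_fsc)
  fix d t assume d: "d \<le> q" "r = p * d" "t \<in> S (ord d)" "a = emb d t" and b: "b \<in> G s"
  show "amul a b = qscale ((-1) ^ (r * s)) (amul b a)"
  proof (rule G_elim[OF b])
    assume "b = 0" then show ?thesis by (simp add: qscale_fsc)
  next
    fix d' t' assume d': "d' \<le> q" "s = p * d'" "t' \<in> S (ord d')" "b = emb d' t'"
    show ?thesis using d d'
      by (simp add: amul_emb qscale_fsc sign M_comm[of t d t' d'] emb_fsc add.commute)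
  qed
qed


lemma Gq: "G (p * q) = emb q ` S 0" using G_pd[of q] by (simp add: ordq)

lemma epsm_emb: "epsm (emb q t) = t []" by (simp add: epsm_def emb_def)

lemma lin_epsm: "linear_on qscale (*) (G (p * q)) UNIV epsm"
  unfolding linear_on_def by (simp add: epsm_def qscale_def)

lemma bij_epsm: "bij_betw epsm (G (p * q)) UNIV"
  unfolding bij_betw_def
proof
  show "inj_on epsm (G (p * q))"
    unfolding Gq inj_on_def
  proof (clarify)
    fix s t assume st: "s \<in> S 0" "t \<in> S 0" "epsm (emb q s) = epsm (emb q t)"
    then have "s [] = t []" by (simp add: epsm_emb)
    then have "s = t" using S0_eq[OF st(1)] S0_eq[OF st(2)] by simp
    then show "emb q s = emb q t" by simp
  qed
  have "r \<in> epsm ` G (p * q)" for r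
    unfolding Gq
  proof (rule image_eqI[of _ _ "emb q (fsc r e0)"])
    show "r = epsm (emb q (fsc r e0))" by (simp add: epsm_emb fsc_def e0_def)
    show "emb q (fsc r e0) \<in> emb q ` S 0" by (intro imageI S_fsc e0_S)
  qed
  then show "epsm ` G (p * q) = UNIV" by auto
qed

lemma G_big: assumes "p * q < i" shows "G i = {0}"
proof (rule G_zero)
  fix d assume "d \<le> q"
  then have "p * d \<le> p * q" by simp
  then show "i \<noteq> p * d" using assms by linarith
qed

lemma G_dvd: "G i \<noteq> {0} \<Longrightarrow> p dvd i"
  by (auto simp: G_def split: if_splits)

lemma fin_dim: "finite_dim_sub qscale (G i)"
proof (cases "p dvd i \<and> i div p \<le> q")
  case False
  have "G i = {0}" unfolding G_def by (rule if_not_P[OF False])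
  then show ?thesis unfolding finite_dim_sub_def qscale_fsc
    by (intro exI[of _ "{}"]) simp
next
  case True
  define d where "d = i div p"
  have Gi: "G i = emb d ` S (ord d)" using True by (simp add: G_def d_def)
  have sub: "fv.subspace (G i)" using G_subspace by (simp add: qscale_fsc)
  have "\<exists>B. finite B \<and> B \<subseteq> G i \<and> fv.span B = G i"
  proof (rule fv.fin_dim_subspace[OF sub])
    show "finite ((\<lambda>xs. emb d (dl xs)) ` T (ord d))" by simp
    show "G i \<subseteq> fv.span ((\<lambda>xs. emb d (dl xs)) ` T (ord d))"
    proof
      fix x assume "x \<in> G i"
      then obtain t where t: "t \<in> S (ord d)" "x = emb d t" using Gi by auto
      have "t = (\<Sum>xs\<in>T (ord d). fsc (t xs) (dl xs))"
      proof (rule ext)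
        fix ys
        have "(\<Sum>xs\<in>T (ord d). fsc (t xs) (dl xs)) ys = (\<Sum>xs\<in>T (ord d). t xs * (if ys = xs then 1 else 0))"
          by (simp add: sum_fun_apply fsc_def dl_def)
        also have "\<dots> = (\<Sum>xs\<in>T (ord d). if xs = ys then t ys else 0)" by (rule sum.cong) (simp_all split: if_splits)
        also have "\<dots> = t ys" using t(1) by (simp add: sum.delta S_supp)
        finally show "t ys = (\<Sum>xs\<in>T (ord d). fsc (t xs) (dl xs)) ys" ..
      qed
      then have "x = (\<Sum>xs\<in>T (ord d). fsc (t xs) (emb d (dl xs)))"
        using t(2) by (metis (no_types, lifting) emb_fsc emb_sum sum.cong)
      also have "\<dots> \<in> fv.span ((\<lambda>xs. emb d (dl xs)) ` T (ord d))"
        by (intro fv.span_sum fv.span_scale fv.span_base) auto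
      finally show "x \<in> fv.span ((\<lambda>xs. emb d (dl xs)) ` T (ord d))" .
    qed
  qed
  then show ?thesis unfolding finite_dim_sub_def qscale_fsc .
qed

definition kap :: "nat \<Rightarrow> rat" where "kap d = (if d \<le> m then eps ^ (d * (q - d)) else 1)"

lemma kap_sq: "kap d * kap d = 1" by (simp add: kap_def eps_sq)

lemma pair_emb: "d \<le> q \<Longrightarrow> amul (emb d a) (emb (q - d) b) = emb q (\<lambda>xs. if xs = [] then kap d * ip (ord d) a b else 0)"
  unfolding kap_def by (simp add: amul_emb M_pair)

lemma G_compl: "d \<le> q \<Longrightarrow> G (p * q - p * d) = emb (q - d) ` S (ord d)"
  using G_pd[of "q - d"] ord_sym[of d] by (simp add: diff_mult_distrib2)

lemma pd_inj:
  assumes "i \<le> p * q" "u \<in> G i" "\<forall>v\<in>G (p * q - i). amul u v = 0"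
  shows "u = 0"
  using assms(2)
proof (rule G_elim)
  fix d t assume d: "d \<le> q" "i = p * d" "t \<in> S (ord d)" "u = emb d t"
  have "emb (q - d) t \<in> G (p * q - i)" using G_compl[OF d(1)] d by auto
  then have "amul u (emb (q - d) t) = 0" using assms(3) by blast
  then have "cmp q (amul u (emb (q - d) t)) [] = 0" by simp
  then have "kap d * ip (ord d) t t = 0" using d by (simp add: pair_emb cmp_emb)
  then have "ip (ord d) t t = 0" using kap_sq[of d] by (metis mult_zero_left mult.assoc mult_1 mult.commute)
  then have "t = 0" using ip_pos[OF d(3)] by simp
  then show "u = 0" using d by simp
qed

lemma lin0: "linear_on s1 s2 X Y h \<Longrightarrow> 0 \<in> X \<Longrightarrow> h 0 = 0"
  unfolding linear_on_def by (metis add.right_neutral add_left_cancel)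

lemma pd_surj:
  assumes "i \<le> p * q" "linear_on qscale qscale (G (p * q - i)) (G (p * q)) h"
  shows "\<exists>u\<in>G i. \<forall>v\<in>G (p * q - i). h v = amul u v"
proof (cases "\<exists>d\<le>q. i = p * d")
  case False
  have Gi: "G i = {0}" using False by (intro G_zero) auto
  have "G (p * q - i) = {0}"
  proof (rule G_zero)
    fix d assume "d \<le> q"
    show "p * q - i \<noteq> p * d"
    proof
      assume "p * q - i = p * d"
      then have "i = p * (q - d)" using assms(1) by (simp add: diff_mult_distrib2)
      moreover have "q - d \<le> q" by simp
      ultimately show False using False by blast
    qed
  qed
  then show ?thesis using Gi lin0[OF assms(2)] by auto
next
  case True
  then obtain d where d: "d \<le> q" "i = p * d" by blast
  have GC: "G (p * q - i) = emb (q - d) ` S (ord d)" using G_compl[OF d(1)] d by simp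
  define g where "g \<phi> = epsm (h (emb (q - d) \<phi>))" for \<phi>
  have hin: "h (emb (q - d) \<phi>) \<in> G (p * q)" if "\<phi> \<in> S (ord d)" for \<phi>
    using assms(2) that GC unfolding linear_on_def by auto
  obtain c where c: "c \<in> S (ord d)" "\<forall>\<phi>\<in>S (ord d). ip (ord d) c \<phi> = g \<phi>"
  proof -
    have "\<exists>c\<in>S (ord d). \<forall>\<phi>\<in>S (ord d). ip (ord d) c \<phi> = g \<phi>"
    proof (rule riesz)
      fix x y assume "x \<in> S (ord d)" "y \<in> S (ord d)"
      then show "g (x + y) = g x + g y"
        using assms(2) GC unfolding linear_on_def g_def emb_add by (auto simp: epsm_def)
    next
      fix c x assume "x \<in> S (ord d)"
      then show "g (fsc c x) = c * g x"
        using assms(2) GC unfolding linear_on_def g_def emb_fsc qscale_fsc by (auto simp: epsm_def fsc_def)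
    qed
    then show ?thesis using that by blast
  qed
  define u where "u = emb d (fsc (kap d) c)"
  have uG: "u \<in> G i" using d c(1) G_pd[OF d(1)] by (auto simp: u_def intro!: S_fsc)
  have "h v = amul u v" if v: "v \<in> G (p * q - i)" for v
  proof -
    obtain \<phi> where phi: "\<phi> \<in> S (ord d)" "v = emb (q - d) \<phi>" using v GC by auto
    obtain t0 where t0: "t0 \<in> S 0" "h v = emb q t0" using hin[OF phi(1)] phi(2) Gq by auto
    have "t0 [] = g \<phi>" using t0 phi by (simp add: g_def epsm_emb)
    moreover have eq: "fsc (g \<phi>) e0 = (\<lambda>xs. if xs = [] then g \<phi> else 0)" by (auto simp: fsc_def e0_def)
    ultimately have "h v = emb q (\<lambda>xs. if xs = [] then g \<phi> else 0)"
      using t0 S0_eq[OF t0(1)] by simp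
    also have "\<dots> = amul u v"
    proof -
      have "ip (ord d) (fsc (kap d) c) \<phi> = kap d * g \<phi>" using ip_sc1 c phi by simp
      then have X: "kap d * ip (ord d) (fsc (kap d) c) \<phi> = g \<phi>"
        using kap_sq[of d] by (simp add: mult.assoc[symmetric])
      have e: "amul u v = emb q (\<lambda>xs. if xs = [] then kap d * ip (ord d) (fsc (kap d) c) \<phi> else 0)"
        using phi d by (simp add: u_def pair_emb)
      show ?thesis unfolding e X ..
    qed
    finally show ?thesis .
  qed
  then show ?thesis using uG by blast
qed


lemma contr1:
  assumes X: "X \<in> S j" "\<forall>\<psi>\<in>S j. ip j X \<psi> = (\<Sum>w\<in>T j. P w * \<psi> w)"
    and phi: "\<phi> \<in> S (Suc j + l)" and z: "z \<in> T l" and i: "i < n"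
  shows "(\<Sum>w\<in>T j. X w * \<phi> ([i] @ w @ z)) = (\<Sum>w\<in>T j. P w * \<phi> ([i] @ w @ z))"
proof -
  define sl where "sl = (\<lambda>w. if w \<in> T j then \<phi> ([i] @ w @ z) else 0)"
  have "[i] \<in> T 1" using i by (simp add: T_def)
  then have slS: "sl \<in> S j" unfolding sl_def by (rule S_slice[OF phi _ z]) simp
  have "(\<Sum>w\<in>T j. X w * \<phi> ([i] @ w @ z)) = ip j X sl" by (simp add: ip_eval sl_def)
  also have "\<dots> = (\<Sum>w\<in>T j. P w * sl w)" using X(2) slS by blast
  also have "\<dots> = (\<Sum>w\<in>T j. P w * \<phi> ([i] @ w @ z))" by (simp add: sl_def)
  finally show ?thesis .
qed

end

primrec pcl :: "(nat \<Rightarrow> nat list \<Rightarrow> rat) \<Rightarrow> nat \<Rightarrow> nat list \<Rightarrow> rat" where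
  "pcl c r [] = 1"
| "pcl c r (i # w) = c r [i] * pcl c (Suc r) w"

context alg2 begin

lemma chain:
  assumes "j \<le> q"
  shows "\<exists>X. foldr amul (map (\<lambda>k. emb 1 (c k)) [q - j..<q]) one = emb j X \<and>
    (j \<le> m \<longrightarrow> X \<in> S j \<and> (\<forall>\<phi>\<in>S j. ip j X \<phi> = (\<Sum>u\<in>T j. pcl c (q - j) u * \<phi> u))) \<and>
    (m < j \<longrightarrow> X = (\<lambda>xs. if xs \<in> T (q - j) then (\<Sum>u\<in>T j. pcl c (q - j) u * f (u @ xs)) else 0))"
  using assms
proof (induction j)
  case 0
  show ?case
    by (rule exI[of _ e0]) (use e0_S in \<open>simp add: one_def ip_eval e0_def\<close>)
next
  case (Suc j)
  then obtain X where X: "foldr amul (map (\<lambda>k. emb 1 (c k)) [q - j..<q]) one = emb j X"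
    "j \<le> m \<longrightarrow> X \<in> S j \<and> (\<forall>\<phi>\<in>S j. ip j X \<phi> = (\<Sum>u\<in>T j. pcl c (q - j) u * \<phi> u))"
    "m < j \<longrightarrow> X = (\<lambda>xs. if xs \<in> T (q - j) then (\<Sum>u\<in>T j. pcl c (q - j) u * f (u @ xs)) else 0)"
    by auto
  define r where "r = q - Suc j"
  have rj: "Suc r = q - j" "q - Suc j = r" using Suc.prems by (auto simp: r_def)
  have upt: "[q - Suc j..<q] = r # [q - j..<q]" using Suc.prems by (simp add: r_def upt_conv_Cons rj(1)[symmetric])
  have fold: "foldr amul (map (\<lambda>k. emb 1 (c k)) [q - Suc j..<q]) one = emb (Suc j) (M 1 j (c r) X)"
    unfolding upt using X(1) by (simp add: amul_emb)
  have pcl_Cons: "pcl c r (i # w) = c r [i] * pcl c (q - j) w" for i w by (simp add: rj(1))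
  have sumT1: "(\<Sum>u\<in>T 1. g u) = (\<Sum>i<n. g [i])" for g :: "nat list \<Rightarrow> rat" by (rule sum_T1)
  consider "Suc j \<le> m" | "j = m" | "m < j" by linarith
  then show ?case
  proof cases
    case 1
    then have Xj: "X \<in> S j" "\<forall>\<phi>\<in>S j. ip j X \<phi> = (\<Sum>u\<in>T j. pcl c (q - j) u * \<phi> u)" using X(2) by auto
    have M: "M 1 j (c r) X = RR (Suc j) (llf 1 j (c r) X)" using 1 m1 Suc.prems by (simp add: M_def)
    have "ip (Suc j) (M 1 j (c r) X) \<phi> = (\<Sum>u\<in>T (Suc j). pcl c (q - Suc j) u * \<phi> u)" if phi: "\<phi> \<in> S (Suc j)" for \<phi>
    proof -
      have phi': "\<phi> \<in> S (Suc j + 0)" using phi by simp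
      have "ip (Suc j) (M 1 j (c r) X) \<phi> = llf 1 j (c r) X \<phi>" unfolding M using RR_llf(2)[of \<phi> "Suc j"] phi by simp
      also have "\<dots> = (\<Sum>i<n. c r [i] * (\<Sum>w\<in>T j. X w * \<phi> ([i] @ w @ [])))"
        unfolding llf_def sumT1 by (simp add: sum_distrib_left ac_simps)
      also have "\<dots> = (\<Sum>i<n. c r [i] * (\<Sum>w\<in>T j. pcl c (q - j) w * \<phi> ([i] @ w @ [])))"
        using contr1[OF Xj phi'] by (intro sum.cong refl) (simp add: T_def)
      also have "\<dots> = (\<Sum>u\<in>T (Suc j). pcl c r u * \<phi> u)"
        unfolding sum_T_Suc pcl_Cons by (simp add: sum_distrib_left ac_simps)
      finally show ?thesis by (simp add: rj)
    qed
    moreover have "M 1 j (c r) X \<in> S (Suc j)" unfolding M by (rule RR_llf(1))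
    ultimately show ?thesis using fold 1 by auto
  next
    case 2
    then have Xj: "X \<in> S j" "\<forall>\<phi>\<in>S j. ip j X \<phi> = (\<Sum>u\<in>T j. pcl c (q - j) u * \<phi> u)" using X(2) by auto
    have "\<not> q < 1 + j" "\<not> 1 + j \<le> m" using 2 m1 qm by auto
    then have M: "M 1 j (c r) X = fc 1 j (c r) X" using 2 m1 by (simp add: M_def)
    have "fc 1 j (c r) X xs = (if xs \<in> T (q - Suc j) then (\<Sum>u\<in>T (Suc j). pcl c (q - Suc j) u * f (u @ xs)) else 0)" for xs
    proof (cases "xs \<in> T (q - Suc j)")
      case True
      have fS': "f \<in> S (Suc j + (q - Suc j))" using fS Suc.prems by simp
      have "fc 1 j (c r) X xs = (\<Sum>i<n. c r [i] * (\<Sum>w\<in>T j. X w * f ([i] @ w @ xs)))"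
        unfolding fc_def sumT1 using True by (simp add: sum_distrib_left ac_simps)
      also have "\<dots> = (\<Sum>i<n. c r [i] * (\<Sum>w\<in>T j. pcl c (q - j) w * f ([i] @ w @ xs)))"
        using contr1[OF Xj fS' True] by (intro sum.cong refl) simp
      also have "\<dots> = (\<Sum>u\<in>T (Suc j). pcl c r u * f (u @ xs))"
        unfolding sum_T_Suc pcl_Cons by (simp add: sum_distrib_left ac_simps)
      finally show ?thesis using True by (simp add: rj)
    qed (simp add: fc_def)
    then show ?thesis using fold 2 M by (auto simp: fun_eq_iff)
  next
    case 3
    have XX: "X = (\<lambda>xs. if xs \<in> T (q - j) then (\<Sum>u\<in>T j. pcl c (q - j) u * f (u @ xs)) else 0)"
      using X(3) 3 by auto
    have M: "M 1 j (c r) X = fsc (eps ^ j) (cr 1 (q - j) (c r) X)" using 3 m1 Suc.prems by (simp add: M_def)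
    have "fsc (eps ^ j) (cr 1 (q - j) (c r) X) xs = (if xs \<in> T (q - Suc j) then (\<Sum>u\<in>T (Suc j). pcl c (q - Suc j) u * f (u @ xs)) else 0)" for xs
    proof (cases "xs \<in> T (q - Suc j)")
      case True
      have ix: "i < n \<Longrightarrow> [i] @ xs \<in> T (q - j)" for i using True Suc.prems by (auto simp: T_def)
      have blk: "f (w @ [i] @ xs) = eps ^ j * f ([i] @ w @ xs)" if "i < n" "w \<in> T j" for i w
      proof -
        have "[] @ w @ [i] @ xs \<in> T q" using that True Suc.prems by (auto simp: T_def)
        then show ?thesis using S_block[OF fS, of "[]" w "[i]" xs] that by (simp add: T_length)
      qed
      have "fsc (eps ^ j) (cr 1 (q - j) (c r) X) xs = eps ^ j * (\<Sum>i<n. c r [i] * (\<Sum>w\<in>T j. pcl c (q - j) w * f (w @ [i] @ xs)))"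
        unfolding cr_def fsc_def sumT1 XX using True ix by (simp add: Suc_diff_Suc rj)
      also have "\<dots> = eps ^ j * (\<Sum>i<n. c r [i] * (\<Sum>w\<in>T j. pcl c (q - j) w * (eps ^ j * f ([i] @ w @ xs))))"
        using blk by (intro arg_cong2[where f="(*)"] sum.cong refl) auto
      also have "\<dots> = (eps ^ j * eps ^ j) * (\<Sum>i<n. c r [i] * (\<Sum>w\<in>T j. pcl c (q - j) w * f ([i] @ w @ xs)))"
        by (simp add: sum_distrib_left ac_simps)
      also have "\<dots> = (\<Sum>u\<in>T (Suc j). pcl c r u * f (u @ xs))"
        unfolding eps_sq sum_T_Suc pcl_Cons by (simp add: sum_distrib_left ac_simps)
      finally show ?thesis using True by (simp add: rj)
    qed (simp add: cr_def fsc_def Suc_diff_Suc)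
    then show ?thesis using fold 3 M by (auto simp: fun_eq_iff)
  qed
qed

lemma chain_final:
  "epsm (foldr amul (map (\<lambda>k. emb 1 (c k)) [0..<q]) one) = (\<Sum>u\<in>T q. pcl c 0 u * f u)"
proof -
  obtain X where X: "foldr amul (map (\<lambda>k. emb 1 (c k)) [q - q..<q]) one = emb q X"
    "m < q \<longrightarrow> X = (\<lambda>xs. if xs \<in> T (q - q) then (\<Sum>u\<in>T q. pcl c (q - q) u * f (u @ xs)) else 0)"
    using chain[of q] by auto
  have "m < q" using qm by simp
  then show ?thesis using X by (simp add: epsm_emb)
qed

end


context alg2 begin

lemma is_graded_algebra: "graded_algebra qscale Aset G amul one"
  unfolding graded_algebra_def
proof (intro conjI allI ballI impI)
  show "vector_space qscale" by (rule vs_q)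
  show "module.subspace qscale (G i)" for i by (rule G_subspace)
  show "Aset = {\<Sum>i\<in>I. x i |I x. finite I \<and> (\<forall>i\<in>I. x i \<in> G i)}" by (rule Aset_def)
  show "x i = 0" if "finite I \<and> (\<forall>i\<in>I. x i \<in> G i) \<and> sum x I = 0" "i \<in> I" for I x i
    using indep[of I x] that by blast
  show "amul (a + b) c = amul a c + amul b c" for a b c by (rule amul_add1)
  show "amul a (b + c) = amul a b + amul a c" for a b c by (rule amul_add2)
  show "amul (qscale k a) b = qscale k (amul a b)" for k a b by (simp add: qscale_fsc amul_fsc1)
  show "amul a (qscale k b) = qscale k (amul a b)" for k a b by (simp add: qscale_fsc amul_fsc2)
  show "amul (amul a b) c = amul a (amul b c)" if "a \<in> Aset" "b \<in> Aset" "c \<in> Aset" for a b c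
    using that by (simp add: assoc_Hom Aset_Hom)
  show "amul a b \<in> G (r + s')" if "a \<in> G r" "b \<in> G s'" for r s' a b using that by (rule grading)
  show "one \<noteq> 0" by (rule one_ne)
  show "G 0 = {qscale k one |k. True}" by (rule G0)
  show "amul one a = a" if "a \<in> Aset" for a using unit_Hom[OF Aset_Hom[OF that]] by simp
  show "amul a one = a" if "a \<in> Aset" for a using unit_Hom[OF Aset_Hom[OF that]] by simp
qed

lemma is_graded_commutative: "graded_commutative qscale G amul"
  unfolding graded_commutative_def using comm by blast

lemma is_pd: "poincare_duality qscale G amul (p * q)"
  unfolding poincare_duality_def
proof (intro conjI allI impI ballI)
  show "\<exists>f. linear_on qscale (*) (G (p * q)) UNIV f \<and> bij_betw f (G (p * q)) UNIV"
    using lin_epsm bij_epsm by blast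
  show "G i = {0}" if "p * q < i" for i using that by (rule G_big)
  show "finite_dim_sub qscale (G i)" for i by (rule fin_dim)
  show "u = 0" if "i \<le> p * q" "u \<in> G i" "\<forall>v\<in>G (p * q - i). amul u v = 0" for i u
    using pd_inj that by blast
  show "\<exists>u\<in>G i. \<forall>v\<in>G (p * q - i). h v = amul u v"
    if "i \<le> p * q" "linear_on qscale qscale (G (p * q - i)) (G (p * q)) h" for i h
    using pd_surj that by blast
qed

end

locale main = alg2 n eps q m f p + fdv: finite_dimensional_vector_space sV Basis
  for n eps q m f p and sV :: "rat \<Rightarrow> 'v::ab_group_add \<Rightarrow> 'v" and Basis +
  fixes e :: "nat \<Rightarrow> 'v" and F :: "(nat \<Rightarrow> 'v) \<Rightarrow> rat"
  assumes e_bij: "bij_betw e {..<n} Basis"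
    and Fml: "multilinear sV q F"
    and f_eq: "\<forall>xs\<in>T q. f xs = F (\<lambda>k. e (xs ! k))"
begin

definition coord :: "nat \<Rightarrow> 'v \<Rightarrow> rat" where "coord i v = fdv.representation Basis v (e i)"

definition ct :: "'v \<Rightarrow> nat list \<Rightarrow> rat" where
  "ct v = (\<lambda>xs. case xs of [i] \<Rightarrow> if i < n then coord i v else 0 | _ \<Rightarrow> 0)"

definition iota :: "'v \<Rightarrow> qvec" where "iota v = emb 1 (ct v)"

lemma decomp: "v = (\<Sum>i<n. sV (coord i v) (e i))"
proof -
  have "(\<Sum>b\<in>Basis. sV (fdv.representation Basis v b) b) = v"
    by (rule fdv.sum_representation_eq) (auto simp: fdv.independent_Basis fdv.span_Basis fdv.finite_Basis)
  moreover have "(\<Sum>i<n. sV (coord i v) (e i)) = (\<Sum>b\<in>Basis. sV (fdv.representation Basis v b) b)"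
    unfolding coord_def by (rule sum.reindex_bij_betw[OF e_bij])
  ultimately show ?thesis by simp
qed

lemma coord_add: "coord i (v + w) = coord i v + coord i w"
  unfolding coord_def
  by (subst fdv.representation_add) (auto simp: fdv.independent_Basis fdv.span_Basis)

lemma coord_scale: "coord i (sV c v) = c * coord i v"
  unfolding coord_def
  by (subst fdv.representation_scale) (auto simp: fdv.independent_Basis fdv.span_Basis)

lemma coord_comb: assumes "j < n" shows "coord j (\<Sum>i<n. sV (t i) (e i)) = t j"
proof -
  have eB: "e i \<in> Basis" if "i < n" for i using e_bij that by (auto simp: bij_betw_def)
  have einj: "i < n \<Longrightarrow> e j = e i \<longleftrightarrow> j = i" for i using e_bij assms by (auto simp: bij_betw_def inj_on_def)
  have "coord j (\<Sum>i<n. sV (t i) (e i)) = (\<Sum>i<n. fdv.representation Basis (sV (t i) (e i)) (e j))"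
    unfolding coord_def
    by (subst fdv.representation_sum) (auto simp: fdv.independent_Basis fdv.span_Basis)
  also have "\<dots> = (\<Sum>i<n. t i * (if e j = e i then 1 else 0))"
    by (intro sum.cong refl)
       (simp add: fdv.representation_scale fdv.representation_basis fdv.independent_Basis fdv.span_Basis eB)
  also have "\<dots> = (\<Sum>i<n. if i = j then t j else 0)"
    by (intro sum.cong refl) (auto simp: einj)
  also have "\<dots> = t j" using assms by simp
  finally show ?thesis .
qed

lemma ct_S: "ct v \<in> S 1"
  unfolding S_def
proof (intro CollectI conjI allI impI ballI)
  fix xs assume "xs \<notin> T 1"
  then show "ct v xs = 0" by (auto simp: ct_def T_def split: list.split)
qed auto

lemma ord1: "ord 1 = 1" using m1 by (simp add: ord_def)

lemma Gp: "G p = emb 1 ` S 1"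
proof -
  have "1 \<le> q" using qm by simp
  then show ?thesis using G_pd[of 1] ord1 by simp
qed

lemma iota_lin: "linear_on sV qscale UNIV (G p) iota"
  unfolding linear_on_def
proof (intro conjI ballI allI)
  show "iota x \<in> G p" for x unfolding Gp iota_def by (intro imageI ct_S)
  show "iota (x + y) = iota x + iota y" for x y
    unfolding iota_def emb_add[symmetric] by (rule arg_cong[where f="emb 1"]) (auto simp: ct_def coord_add fun_eq_iff split: list.split)
  show "iota (sV c x) = qscale c (iota x)" for c x
    unfolding iota_def qscale_fsc emb_fsc[symmetric] by (rule arg_cong[where f="emb 1"]) (auto simp: ct_def coord_scale fsc_def fun_eq_iff split: list.split)
qed

lemma iota_bij: "bij_betw iota UNIV (G p)"
  unfolding bij_betw_def
proof
  show "inj_on iota UNIV"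
  proof (rule inj_onI)
    fix v w assume "iota v = iota w"
    moreover have "1 \<le> q" using qm by simp
    ultimately have eq: "ct v = ct w" unfolding iota_def using emb_inj[of 1] by blast
    have "coord i v = coord i w" if "i < n" for i
    proof -
      have "ct v [i] = ct w [i]" using eq by simp
      then show ?thesis using that by (simp add: ct_def)
    qed
    then show "v = w" using decomp[of v] decomp[of w] by simp
  qed
  show "range iota = G p"
  proof
    show "range iota \<subseteq> G p" using iota_lin by (auto simp: linear_on_def)
    show "G p \<subseteq> range iota"
    proof
      fix x assume "x \<in> G p"
      then obtain t where t: "t \<in> S 1" "x = emb 1 t" unfolding Gp by auto
      define v where "v = (\<Sum>i<n. sV (t [i]) (e i))"
      have "ct v = t"
      proof
        fix xs show "ct v xs = t xs"
        proof (cases "xs \<in> T 1")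
          case True
          then obtain i where "xs = [i]" "i < n" by (auto simp: T_def length_Suc_conv)
          then show ?thesis by (simp add: ct_def v_def coord_comb)
        next
          case False
          then show ?thesis using t(1) by (auto simp: ct_def S_def T_def split: list.split)
        qed
      qed
      then show "x \<in> range iota" using t by (auto simp: iota_def)
    qed
  qed
qed


lemma sum_TS0: "(\<Sum>u\<in>T (Suc 0). g u) = (\<Sum>i<n. g [i])"
  using sum_T1[of g] by simp

lemma pcl_snoc: "pcl C s (u @ [i]) = pcl C s u * C (s + length u) [i]"
  by (induction u arbitrary: s) (simp_all add: ac_simps)

lemma F_cong: "(\<And>i. i < q \<Longrightarrow> v i = w i) \<Longrightarrow> F v = F w"
  using Fml unfolding multilinear_def by blast
lemma F_add: "k < q \<Longrightarrow> F (v(k := x + y)) = F (v(k := x)) + F (v(k := y))"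
  using Fml unfolding multilinear_def by blast
lemma F_scale: "k < q \<Longrightarrow> F (v(k := sV c x)) = c * F (v(k := x))"
  using Fml unfolding multilinear_def by blast

lemma F_slot: assumes "k < q" shows "F (w(k := \<Sum>i<N. sV (a i) (e i))) = (\<Sum>i<N. a i * F (w(k := e i)))"
proof (induction N)
  case 0
  have "F (w(k := sV 0 0)) = 0 * F (w(k := 0))" by (rule F_scale[OF assms])
  moreover have "sV 0 0 = 0" by (rule fdv.scale_zero_left)
  ultimately have "F (w(k := 0)) = 0" by simp
  then show ?case by (simp only: lessThan_0 sum.empty)
next
  case (Suc N)
  show ?case unfolding sum.lessThan_Suc F_add[OF assms] F_scale[OF assms] Suc.IH ..
qed

lemma F_exp:
  assumes "r \<le> q"
  shows "F v = (\<Sum>u\<in>T r. pcl (\<lambda>k. ct (v k)) 0 u * F (\<lambda>k. if k < r then e (u ! k) else v k))"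
  using assms
proof (induction r)
  case 0
  then show ?case by simp
next
  case (Suc r)
  define C where "C = (\<lambda>k. ct (v k))"
  have r: "r < q" using Suc.prems by simp
  have step: "F (\<lambda>k. if k < r then e (u ! k) else v k) =
     (\<Sum>i<n. coord i (v r) * F (\<lambda>k. if k < Suc r then e ((u @ [i]) ! k) else v k))"
    if u: "u \<in> T r" for u
  proof -
    define g where "g = (\<lambda>k. if k < r then e (u ! k) else v k)"
    have lu: "length u = r" using u by (simp add: T_def)
    have "g = g(r := \<Sum>i<n. sV (coord i (v r)) (e i))"
      using decomp[of "v r"] by (auto simp: g_def fun_eq_iff)
    then have "F g = (\<Sum>i<n. coord i (v r) * F (g(r := e i)))"
      using F_slot[OF r, where w=g and N=n and a="\<lambda>i. coord i (v r)"] by simp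
    also have "\<dots> = (\<Sum>i<n. coord i (v r) * F (\<lambda>k. if k < Suc r then e ((u @ [i]) ! k) else v k))"
      by (intro sum.cong refl arg_cong2[where f="(*)"] arg_cong[where f=F])
         (auto simp: g_def fun_eq_iff nth_append lu)
    finally show ?thesis by (simp add: g_def)
  qed
  have "F v = (\<Sum>u\<in>T r. pcl C 0 u * F (\<lambda>k. if k < r then e (u ! k) else v k))"
    using Suc.IH Suc.prems by (simp add: C_def)
  also have "\<dots> = (\<Sum>u\<in>T r. \<Sum>i<n. pcl C 0 (u @ [i]) * F (\<lambda>k. if k < Suc r then e ((u @ [i]) ! k) else v k))"
  proof (intro sum.cong refl)
    fix u assume u: "u \<in> T r"
    have lu: "length u = r" using u by (simp add: T_def)
    have "C r [i] = coord i (v r)" if "i < n" for i using that by (simp add: C_def ct_def)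
    then show "pcl C 0 u * F (\<lambda>k. if k < r then e (u ! k) else v k) =
      (\<Sum>i<n. pcl C 0 (u @ [i]) * F (\<lambda>k. if k < Suc r then e ((u @ [i]) ! k) else v k))"
      unfolding step[OF u] by (simp add: sum_distrib_left pcl_snoc lu ac_simps)
  qed
  also have "\<dots> = (\<Sum>u\<in>T (Suc r). pcl C 0 u * F (\<lambda>k. if k < Suc r then e (u ! k) else v k))"
  proof -
    have "(\<Sum>u\<in>T (r + 1). pcl C 0 u * F (\<lambda>k. if k < Suc r then e (u ! k) else v k)) =
      (\<Sum>u\<in>T r. \<Sum>w\<in>T 1. pcl C 0 (u @ w) * F (\<lambda>k. if k < Suc r then e ((u @ w) ! k) else v k))"
      by (rule sum_T_split)
    then show ?thesis by (simp add: sum_TS0)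
  qed
  finally show ?case by (simp add: C_def)
qed

lemma F_cup: "F v = epsm (cup_prod amul one (map (\<lambda>i. iota (v i)) [0..<q]))"
proof -
  have "F v = (\<Sum>u\<in>T q. pcl (\<lambda>k. ct (v k)) 0 u * F (\<lambda>k. if k < q then e (u ! k) else v k))"
    by (rule F_exp) simp
  also have "\<dots> = (\<Sum>u\<in>T q. pcl (\<lambda>k. ct (v k)) 0 u * f u)"
  proof (intro sum.cong refl arg_cong2[where f="(*)"])
    fix u assume "u \<in> T q"
    moreover have "F (\<lambda>k. if k < q then e (u ! k) else v k) = F (\<lambda>k. e (u ! k))"
      by (rule F_cong) simp
    ultimately show "F (\<lambda>k. if k < q then e (u ! k) else v k) = f u"
      using f_eq by simp
  qed
  also have "\<dots> = epsm (foldr amul (map (\<lambda>k. emb 1 (ct (v k))) [0..<q]) one)"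
    by (rule chain_final[symmetric])
  finally show ?thesis by (simp add: cup_prod_def iota_def comp_def)
qed

end


theorem proposition4p2:
  fixes p q :: nat
    and sV :: "rat \<Rightarrow> 'v::ab_group_add \<Rightarrow> 'v"
    and Basis :: "'v set"
    and F :: "(nat \<Rightarrow> 'v) \<Rightarrow> rat"
  assumes "p > 0" and "q \<ge> 3" and "odd q"
    and "finite_dimensional_vector_space sV Basis"
    and "multilinear sV q F"
    and "odd p \<Longrightarrow> skew_symmetric_ml q F"
    and "even p \<Longrightarrow> symmetric_ml q F"
  shows "\<exists>(A :: qvec set) (G :: nat \<Rightarrow> qvec set) mult one
            (\<iota> :: 'v \<Rightarrow> qvec) (\<epsilon> :: qvec \<Rightarrow> rat).
      graded_algebra qscale A G mult one \<and>
      graded_commutative qscale G mult \<and>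
      poincare_duality qscale G mult (p * q) \<and>
      linear_on sV qscale UNIV (G p) \<iota> \<and> bij_betw \<iota> UNIV (G p) \<and>
      linear_on qscale (*) (G (p * q)) UNIV \<epsilon> \<and> bij_betw \<epsilon> (G (p * q)) UNIV \<and>
      (\<forall>i>p * q. G i = {0}) \<and>
      (\<forall>i. G i \<noteq> {0} \<longrightarrow> p dvd i) \<and>
      (\<forall>v. F v = \<epsilon> (cup_prod mult one (map (\<lambda>i. \<iota> (v i)) [0..<q])))"
proof -
  define n where "n = card Basis"
  have fin: "finite Basis"
    using assms(4) by (rule finite_dimensional_vector_space.finite_Basis)
  obtain e where e: "bij_betw e {..<n} Basis"
    using ex_bij_betw_nat_finite[OF fin] by (auto simp: n_def atLeast0LessThan)
  define eps :: rat where "eps = (-1) ^ p"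
  define m where "m = q div 2"
  have qm: "q = 2 * m + 1" using assms(3) by (simp add: m_def)
  have m1: "1 \<le> m" using assms(2) by (simp add: m_def)
  have eps2: "eps * eps = 1" by (simp add: eps_def power_mult_distrib[symmetric])
  interpret tens n eps by unfold_locales (rule eps2)
  define f where "f = (\<lambda>xs. if xs \<in> T q then F (\<lambda>k. e (xs ! k)) else 0)"
  have Fc: "F v = F w" if "\<And>i. i < q \<Longrightarrow> v i = w i" for v w
    using assms(5) that unfolding multilinear_def by blast
  have fS: "f \<in> S q"
    unfolding S_def
  proof (intro CollectI conjI allI impI ballI)
    fix xs assume "xs \<notin> T q" then show "f xs = 0" by (simp add: f_def)
  next
    fix xs a b assume xs: "xs \<in> T q" and ab: "a < q" "b < q" "a \<noteq> b"
    define xs' where "xs' = xs[a := xs ! b, b := xs ! a]"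
    have lx: "length xs = q" using xs by (simp add: T_def)
    have xs': "xs' \<in> T q" using xs ab lx
      by (auto simp: T_def xs'_def dest!: set_update_subset_insert[THEN subsetD])
    define w where "w = (\<lambda>k. e (xs ! k))"
    have "F (\<lambda>k. e (xs' ! k)) = F (w(a := w b, b := w a))"
      by (rule Fc) (use ab lx in \<open>auto simp: xs'_def w_def nth_list_update\<close>)
    also have "\<dots> = eps * F w"
    proof (cases "odd p")
      case True
      then have "skew_symmetric_ml q F" by (rule assms(6))
      then show ?thesis using ab True by (simp add: skew_symmetric_ml_def eps_def)
    next
      case False
      then have "symmetric_ml q F" by (intro assms(7)) simp
      then show ?thesis using ab False by (simp add: symmetric_ml_def eps_def)
    qed
    finally show "f (xs[a := xs ! b, b := xs ! a]) = eps * f xs"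
      using xs xs' by (simp add: f_def xs'_def w_def)
  qed
  interpret alg n eps q m f by unfold_locales (use qm m1 fS in auto)
  interpret alg2 n eps q m f p by unfold_locales (use assms(1) eps_def in auto)
  interpret main n eps q m f p sV Basis e F
  proof -
    show "main n eps q m f p sV Basis e F"
      unfolding main_def main_axioms_def
      using alg2_axioms assms(4) e assms(5) by (auto simp: f_def)
  qed
  show ?thesis
    apply (rule exI[of _ Aset], rule exI[of _ G], rule exI[of _ amul], rule exI[of _ one],
           rule exI[of _ iota], rule exI[of _ epsm])
    using is_graded_algebra is_graded_commutative is_pd iota_lin iota_bij lin_epsm bij_epsm
      G_big G_dvd F_cup by blast
qed


end
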